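(* Let $(\mathbf{H},m,\Delta)$ be a poset Hopf monoid and let $H=\mathcal{F}(\mathbf{k}\mathbf{H})$ be the Hopf algebra obtained by the Fock functor. Then the space of primitives of $H_n$ is the image of the space of primitives of $\mathbf{k}\mathbf{H}[\{1,\dots,n\}]$ under the quotient map $p\mapsto[p]$. Further, if $(\mathbf{H},\Box)$ is a poset monoid forming an adjoint pair $\Delta\dashv\Box$ with $(\mathbf{H},\Delta)$, then the space of primitives of $H$ has a basis given by $\{[\omega_x]: x\ \text{indecomposable with respect to }\Box\}$, where $\omega_x=\sum_{x\le y}\mu(x,y)\,y$ with the sum and Möbius function taken in the poset $\mathbf{H}[\{1,\dots,n\}]$.
   Context: $\mathbf{k}$ is a field of characteristic $0$. A (connected) poset species $\mathbf{H}$ assigns to each finite set $I$ a locally finite poset $\mathbf{H}[I]$, $\mathbf{H}[\emptyset]=\{1\}$, and to each bijection an order-preserving bijection (relabelling), functorially. A poset Hopf monoid $(\mathbf{H},m,\Delta)$ consists of order-preserving maps $m_{S,T}:\mathbf{H}[S]\times\mathbf{H}[T]\to\mathbf{H}[S\sqcup T]$ (natural, associative, unital) and $\Delta_{S,T}:\mathbf{H}[S\sqcup T]\to\mathbf{H}[S]\times\mathbf{H}[T]$ (natural, coassociative, counital), satisfying compatibility: for $I=S_1\sqcup S_2=T_1\sqcup T_2$, $A=S_1\cap T_1$, $B=S_1\cap T_2$, $C=S_2\cap T_1$, $D=S_2\cap T_2$, if $\Delta_{A,B}(x)=(x_A,x_B)$ and $\Delta_{C,D}(y)=(y_C,y_D)$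 then $\Delta_{T_1,T_2}(m_{S_1,S_2}(x,y))=(m_{A,C}(x_A,y_C),m_{B,D}(x_B,y_D))$. A poset monoid $(\mathbf{H},\Box)$ is defined like $m$ (order-preserving, natural, associative, unital). Adjoint pair $\Delta\dashv\Box$: $\Delta_{S,T}(x)\le(y,z)\iff x\le\Box_{S,T}(y,z)$. $x\in\mathbf{H}[I]$ is $\Box$-indecomposable if it is not $\Box_{S,T}(y,z)$ with $S,T$ nonempty. $\mathbf{k}\mathbf{H}[I]$ has basis $\mathbf{H}[I]$ with linearly extended operations. The Fock functor gives $H=\bigoplus_{n\ge0}H_n$, $H_n=\mathbf{k}\mathbf{H}[\{1,\dots,n\}]_{S_n}$ (coinvariants under the relabelling action of the symmetric group $S_n$), with $[x]$ the class of $x$; multiplication $[x][y]=[m(x,y)]$ and comultiplication $\Delta([x])=\sum_{S\sqcup T=\{1,\dots,n\}}[\Delta_{S,T}(x)]$, where components on $S,T$ are identified with components on $\{1,\dots,|S|\},\{1,\dots,|T|\}$ via order-preserving relabelling. An element of $\mathbf{k}\mathbf{H}[I]$ is primitive if $\Delta_{S,T}$ kills it for all $S,T$ nonempty; an element $h\in H$ is primitive if $\Delta(h)=h\otimes1+1\otimes h$.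
   Formalization: The basis claim for the classes $[\omega_x]$ also assumes that, for every n, each x in $\mathbf{H}[\{1,\dots,n\}]$ has only finitely many elements y there with $x\le y$. The statement above fails without it. *)

theory Defs
  imports Main "HOL-Library.Function_Algebras"
begin

definition supp :: "('x \<Rightarrow> 'k::zero) \<Rightarrow> 'x set" where
  "supp v = {x. v x \<noteq> 0}"

text \<open>An element of the linearization k[A]: finitely supported function with support in A.\<close>
definition lin :: "'x set \<Rightarrow> ('x \<Rightarrow> 'k::zero) \<Rightarrow> bool" where
  "lin A v \<longleftrightarrow> finite (supp v) \<and> supp v \<subseteq> A"

definition push :: "('x \<Rightarrow> 'y) \<Rightarrow> ('x \<Rightarrow> 'k::comm_monoid_add) \<Rightarrow> 'y \<Rightarrow> 'k" where
  "push f v = (\<lambda>y. \<Sum>x\<in>{x\<in>supp v. f x = y}. v x)"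

definition delta :: "'x \<Rightarrow> 'x \<Rightarrow> 'k::zero_neq_one" where
  "delta x = (\<lambda>z. if z = x then 1 else 0)"

inductive_set lspan :: "('x \<Rightarrow> 'k::field) set \<Rightarrow> ('x \<Rightarrow> 'k) set" for G where
  zero: "0 \<in> lspan G"
| add: "v \<in> lspan G \<Longrightarrow> w \<in> lspan G \<Longrightarrow> v + w \<in> lspan G"
| smult: "v \<in> lspan G \<Longrightarrow> (\<lambda>z. c * v z) \<in> lspan G"
| gen: "g \<in> G \<Longrightarrow> g \<in> lspan G"

text \<open>Labels are finite subsets of nat. H I is the poset H[I] (carrier), le I its order,
  rl \<sigma> I x the relabelling of x \<in> H[I] along the bijection \<sigma> : I \<rightarrow> \<sigma> ` I.\<close>

definition unitH :: "(nat set \<Rightarrow> 'a set) \<Rightarrow> 'a" where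
  "unitH H = the_elem (H {})"

definition poset_species ::
  "(nat set \<Rightarrow> 'a set) \<Rightarrow> (nat set \<Rightarrow> 'a \<Rightarrow> 'a \<Rightarrow> bool) \<Rightarrow> ((nat \<Rightarrow> nat) \<Rightarrow> nat set \<Rightarrow> 'a \<Rightarrow> 'a) \<Rightarrow> bool" where
  "poset_species H le rl \<longleftrightarrow>
    (\<exists>u. H {} = {u}) \<and>
    (\<forall>I. finite I \<longrightarrow>
        (\<forall>x\<in>H I. le I x x) \<and>
        (\<forall>x\<in>H I. \<forall>y\<in>H I. le I x y \<and> le I y x \<longrightarrow> x = y) \<and>
        (\<forall>x\<in>H I. \<forall>y\<in>H I. \<forall>z\<in>H I. le I x y \<and> le I y z \<longrightarrow> le I x z) \<and>
        (\<forall>x\<in>H I. \<forall>y\<in>H I. finite {z\<in>H I. le I x z \<and> le I z y})) \<and>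
    (\<forall>I \<sigma> x. finite I \<and> inj_on \<sigma> I \<and> x \<in> H I \<longrightarrow> rl \<sigma> I x \<in> H (\<sigma> ` I)) \<and>
    (\<forall>I \<sigma> \<tau> x. finite I \<and> x \<in> H I \<and> (\<forall>i\<in>I. \<sigma> i = \<tau> i) \<longrightarrow> rl \<sigma> I x = rl \<tau> I x) \<and>
    (\<forall>I x. finite I \<and> x \<in> H I \<longrightarrow> rl id I x = x) \<and>
    (\<forall>I \<sigma> \<tau> x. finite I \<and> inj_on \<sigma> I \<and> inj_on \<tau> (\<sigma> ` I) \<and> x \<in> H I \<longrightarrow>
        rl \<tau> (\<sigma> ` I) (rl \<sigma> I x) = rl (\<tau> \<circ> \<sigma>) I x) \<and>
    (\<forall>I \<sigma> x y. finite I \<and> inj_on \<sigma> I \<and> x \<in> H I \<and> y \<in> H I \<and> le I x y \<longrightarrow>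
        le (\<sigma> ` I) (rl \<sigma> I x) (rl \<sigma> I y))"

definition poset_monoid ::
  "(nat set \<Rightarrow> 'a set) \<Rightarrow> (nat set \<Rightarrow> 'a \<Rightarrow> 'a \<Rightarrow> bool) \<Rightarrow> ((nat \<Rightarrow> nat) \<Rightarrow> nat set \<Rightarrow> 'a \<Rightarrow> 'a)
   \<Rightarrow> (nat set \<Rightarrow> nat set \<Rightarrow> 'a \<Rightarrow> 'a \<Rightarrow> 'a) \<Rightarrow> bool" where
  "poset_monoid H le rl m \<longleftrightarrow>
    (\<forall>S T x y. finite S \<and> finite T \<and> S \<inter> T = {} \<and> x \<in> H S \<and> y \<in> H T \<longrightarrow> m S T x y \<in> H (S \<union> T)) \<and>
    (\<forall>S T x x' y y'. finite S \<and> finite T \<and> S \<inter> T = {} \<and> x \<in> H S \<and> x' \<in> H S \<and> y \<in> H T \<and> y' \<in> H T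
        \<and> le S x x' \<and> le T y y' \<longrightarrow> le (S \<union> T) (m S T x y) (m S T x' y')) \<and>
    (\<forall>S T x y \<sigma>. finite S \<and> finite T \<and> S \<inter> T = {} \<and> x \<in> H S \<and> y \<in> H T \<and> inj_on \<sigma> (S \<union> T) \<longrightarrow>
        rl \<sigma> (S \<union> T) (m S T x y) = m (\<sigma> ` S) (\<sigma> ` T) (rl \<sigma> S x) (rl \<sigma> T y)) \<and>
    (\<forall>R S T x y z. finite R \<and> finite S \<and> finite T \<and> R \<inter> S = {} \<and> R \<inter> T = {} \<and> S \<inter> T = {}
        \<and> x \<in> H R \<and> y \<in> H S \<and> z \<in> H T \<longrightarrow>
        m (R \<union> S) T (m R S x y) z = m R (S \<union> T) x (m S T y z)) \<and>
    (\<forall>I x. finite I \<and> x \<in> H I \<longrightarrow> m {} I (unitH H) x = x \<and> m I {} x (unitH H) = x)"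

definition poset_comonoid ::
  "(nat set \<Rightarrow> 'a set) \<Rightarrow> (nat set \<Rightarrow> 'a \<Rightarrow> 'a \<Rightarrow> bool) \<Rightarrow> ((nat \<Rightarrow> nat) \<Rightarrow> nat set \<Rightarrow> 'a \<Rightarrow> 'a)
   \<Rightarrow> (nat set \<Rightarrow> nat set \<Rightarrow> 'a \<Rightarrow> 'a \<times> 'a) \<Rightarrow> bool" where
  "poset_comonoid H le rl D \<longleftrightarrow>
    (\<forall>S T x. finite S \<and> finite T \<and> S \<inter> T = {} \<and> x \<in> H (S \<union> T) \<longrightarrow>
        fst (D S T x) \<in> H S \<and> snd (D S T x) \<in> H T) \<and>
    (\<forall>S T x x'. finite S \<and> finite T \<and> S \<inter> T = {} \<and> x \<in> H (S \<union> T) \<and> x' \<in> H (S \<union> T)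
        \<and> le (S \<union> T) x x' \<longrightarrow>
        le S (fst (D S T x)) (fst (D S T x')) \<and> le T (snd (D S T x)) (snd (D S T x'))) \<and>
    (\<forall>S T x \<sigma>. finite S \<and> finite T \<and> S \<inter> T = {} \<and> x \<in> H (S \<union> T) \<and> inj_on \<sigma> (S \<union> T) \<longrightarrow>
        D (\<sigma> ` S) (\<sigma> ` T) (rl \<sigma> (S \<union> T) x) = (rl \<sigma> S (fst (D S T x)), rl \<sigma> T (snd (D S T x)))) \<and>
    (\<forall>R S T x. finite R \<and> finite S \<and> finite T \<and> R \<inter> S = {} \<and> R \<inter> T = {} \<and> S \<inter> T = {}
        \<and> x \<in> H (R \<union> S \<union> T) \<longrightarrow>
        fst (D R (S \<union> T) x) = fst (D R S (fst (D (R \<union> S) T x))) \<and>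
        D S T (snd (D R (S \<union> T) x)) = (snd (D R S (fst (D (R \<union> S) T x))), snd (D (R \<union> S) T x))) \<and>
    (\<forall>I x. finite I \<and> x \<in> H I \<longrightarrow> D {} I x = (unitH H, x) \<and> D I {} x = (x, unitH H))"

definition hopf_compatible ::
  "(nat set \<Rightarrow> 'a set) \<Rightarrow> (nat set \<Rightarrow> nat set \<Rightarrow> 'a \<Rightarrow> 'a \<Rightarrow> 'a)
   \<Rightarrow> (nat set \<Rightarrow> nat set \<Rightarrow> 'a \<Rightarrow> 'a \<times> 'a) \<Rightarrow> bool" where
  "hopf_compatible H m D \<longleftrightarrow>
    (\<forall>S1 S2 T1 T2 x y. finite S1 \<and> finite S2 \<and> S1 \<inter> S2 = {} \<and> T1 \<inter> T2 = {} \<and> S1 \<union> S2 = T1 \<union> T2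
       \<and> x \<in> H S1 \<and> y \<in> H S2 \<longrightarrow>
       D T1 T2 (m S1 S2 x y) =
         (m (S1 \<inter> T1) (S2 \<inter> T1) (fst (D (S1 \<inter> T1) (S1 \<inter> T2) x)) (fst (D (S2 \<inter> T1) (S2 \<inter> T2) y)),
          m (S1 \<inter> T2) (S2 \<inter> T2) (snd (D (S1 \<inter> T1) (S1 \<inter> T2) x)) (snd (D (S2 \<inter> T1) (S2 \<inter> T2) y))))"

definition poset_hopf_monoid ::
  "(nat set \<Rightarrow> 'a set) \<Rightarrow> (nat set \<Rightarrow> 'a \<Rightarrow> 'a \<Rightarrow> bool) \<Rightarrow> ((nat \<Rightarrow> nat) \<Rightarrow> nat set \<Rightarrow> 'a \<Rightarrow> 'a)
   \<Rightarrow> (nat set \<Rightarrow> nat set \<Rightarrow> 'a \<Rightarrow> 'a \<Rightarrow> 'a) \<Rightarrow> (nat set \<Rightarrow> nat set \<Rightarrow> 'a \<Rightarrow> 'a \<times> 'a) \<Rightarrow> bool" where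
  "poset_hopf_monoid H le rl m D \<longleftrightarrow>
    poset_species H le rl \<and> poset_monoid H le rl m \<and> poset_comonoid H le rl D \<and> hopf_compatible H m D"

definition adjoint_pair ::
  "(nat set \<Rightarrow> 'a set) \<Rightarrow> (nat set \<Rightarrow> 'a \<Rightarrow> 'a \<Rightarrow> bool)
   \<Rightarrow> (nat set \<Rightarrow> nat set \<Rightarrow> 'a \<Rightarrow> 'a \<times> 'a) \<Rightarrow> (nat set \<Rightarrow> nat set \<Rightarrow> 'a \<Rightarrow> 'a \<Rightarrow> 'a) \<Rightarrow> bool" where
  "adjoint_pair H le D B \<longleftrightarrow>
    (\<forall>S T x y z. finite S \<and> finite T \<and> S \<inter> T = {} \<and> x \<in> H (S \<union> T) \<and> y \<in> H S \<and> z \<in> H T \<longrightarrow>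
       ((le S (fst (D S T x)) y \<and> le T (snd (D S T x)) z) \<longleftrightarrow> le (S \<union> T) x (B S T y z)))"

definition indecomposable ::
  "(nat set \<Rightarrow> 'a set) \<Rightarrow> (nat set \<Rightarrow> nat set \<Rightarrow> 'a \<Rightarrow> 'a \<Rightarrow> 'a) \<Rightarrow> nat set \<Rightarrow> 'a \<Rightarrow> bool" where
  "indecomposable H B I x \<longleftrightarrow> x \<in> H I \<and>
     \<not> (\<exists>S T y z. S \<noteq> {} \<and> T \<noteq> {} \<and> S \<inter> T = {} \<and> S \<union> T = I \<and> y \<in> H S \<and> z \<in> H T \<and> x = B S T y z)"

definition mobius :: "'a set \<Rightarrow> ('a \<Rightarrow> 'a \<Rightarrow> bool) \<Rightarrow> 'a \<Rightarrow> 'a \<Rightarrow> 'k::comm_ring_1" where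
  "mobius A le = (THE \<mu>. \<forall>x y. \<mu> x y =
     (if x \<in> A \<and> y \<in> A \<and> le x y then
        (if x = y then 1 else - (\<Sum>z\<in>{z\<in>A. le x z \<and> le z y \<and> z \<noteq> y}. \<mu> x z))
      else 0))"

definition nset :: "nat \<Rightarrow> nat set" where
  "nset n = {1..n}"

definition omega :: "(nat set \<Rightarrow> 'a set) \<Rightarrow> (nat set \<Rightarrow> 'a \<Rightarrow> 'a \<Rightarrow> bool) \<Rightarrow> nat \<Rightarrow> 'a \<Rightarrow> 'a \<Rightarrow> 'k::comm_ring_1" where
  "omega H le n x = (\<lambda>y. if y \<in> H (nset n) \<and> le (nset n) x y
                          then mobius (H (nset n)) (le (nset n)) x y else 0)"

definition lin_primitive ::
  "(nat set \<Rightarrow> nat set \<Rightarrow> 'a \<Rightarrow> 'a \<times> 'a) \<Rightarrow> nat set \<Rightarrow> ('a \<Rightarrow> 'k::field) \<Rightarrow> bool" where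
  "lin_primitive D I v \<longleftrightarrow>
    (\<forall>S T. S \<union> T = I \<and> S \<inter> T = {} \<and> S \<noteq> {} \<and> T \<noteq> {} \<longrightarrow> push (D S T) v = 0)"

text \<open>Kernel of the quotient map kH[n] \<rightarrow> H_n = kH[n]_{S_n}.\<close>
definition coinv_ker :: "(nat set \<Rightarrow> 'a set) \<Rightarrow> ((nat \<Rightarrow> nat) \<Rightarrow> nat set \<Rightarrow> 'a \<Rightarrow> 'a) \<Rightarrow> nat
    \<Rightarrow> ('a \<Rightarrow> 'k::field) set" where
  "coinv_ker H rl n = lspan {delta x - delta (rl \<sigma> (nset n) x) | x \<sigma>.
       x \<in> H (nset n) \<and> bij_betw \<sigma> (nset n) (nset n)}"

text \<open>H_a \<otimes> H_b = (kH[a]/K_a) \<otimes> (kH[b]/K_b) = k[H[a] \<times> H[b]] / (K_a \<otimes> kH[b] + kH[a] \<otimes> K_b);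
  this is the kernel of k[H[a] \<times> H[b]] \<rightarrow> H_a \<otimes> H_b.\<close>
definition tensor_ker :: "(nat set \<Rightarrow> 'a set) \<Rightarrow> ((nat \<Rightarrow> nat) \<Rightarrow> nat set \<Rightarrow> 'a \<Rightarrow> 'a) \<Rightarrow> nat \<Rightarrow> nat
    \<Rightarrow> ('a \<times> 'a \<Rightarrow> 'k::field) set" where
  "tensor_ker H rl a b = lspan
     ({delta (y, z) - delta (rl \<sigma> (nset a) y, z) | y z \<sigma>.
         y \<in> H (nset a) \<and> z \<in> H (nset b) \<and> bij_betw \<sigma> (nset a) (nset a)} \<union>
      {delta (y, z) - delta (y, rl \<tau> (nset b) z) | y z \<tau>.
         y \<in> H (nset a) \<and> z \<in> H (nset b) \<and> bij_betw \<tau> (nset b) (nset b)})"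

definition std :: "nat set \<Rightarrow> nat \<Rightarrow> nat" where
  "std S i = card {j\<in>S. j < i} + 1"

text \<open>Component in H_a \<otimes> H_{n-a} of \<Delta>([v]) for v \<in> kH[n] (given by a representative in
  k[H[a] \<times> H[n-a]]).\<close>
definition fock_comp :: "((nat \<Rightarrow> nat) \<Rightarrow> nat set \<Rightarrow> 'a \<Rightarrow> 'a) \<Rightarrow> (nat set \<Rightarrow> nat set \<Rightarrow> 'a \<Rightarrow> 'a \<times> 'a)
    \<Rightarrow> nat \<Rightarrow> nat \<Rightarrow> ('a \<Rightarrow> 'k::field) \<Rightarrow> 'a \<times> 'a \<Rightarrow> 'k" where
  "fock_comp rl D n a v = (\<lambda>yz. \<Sum>S\<in>{S. S \<subseteq> nset n \<and> card S = a}.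
      push (\<lambda>x. (rl (std S) S (fst (D S (nset n - S) x)),
                 rl (std (nset n - S)) (nset n - S) (snd (D S (nset n - S) x)))) v yz)"

text \<open>[v] \<in> H_n (n \<ge> 1) is primitive, i.e. \<Delta>[v] = [v] \<otimes> 1 + 1 \<otimes> [v]: all components
  in H_a \<otimes> H_{n-a} with 0 < a < n vanish (the (n,0) and (0,n) components are [v]\<otimes>1, 1\<otimes>[v]
  by counitality).\<close>
definition fock_primitive :: "(nat set \<Rightarrow> 'a set) \<Rightarrow> ((nat \<Rightarrow> nat) \<Rightarrow> nat set \<Rightarrow> 'a \<Rightarrow> 'a)
    \<Rightarrow> (nat set \<Rightarrow> nat set \<Rightarrow> 'a \<Rightarrow> 'a \<times> 'a) \<Rightarrow> nat \<Rightarrow> ('a \<Rightarrow> 'k::field) \<Rightarrow> bool" where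
  "fock_primitive H rl D n v \<longleftrightarrow>
    (\<forall>a. 0 < a \<and> a < n \<longrightarrow> fock_comp rl D n a v \<in> tensor_ker H rl a (n - a))"

end

theory Submission
  imports Defs "HOL-Combinatorics.Permutations"
begin


lemma sum_fun_apply: "(sum g I) x = (\<Sum>i\<in>I. g i x)"
  by (induction I rule: infinite_finite_induct) auto

lemma supp_iff: "x \<in> supp v \<longleftrightarrow> v x \<noteq> 0" by (simp add: supp_def)

lemma push_superset:
  assumes "finite A" "supp v \<subseteq> A"
  shows "push f v y = (\<Sum>x\<in>{x\<in>A. f x = y}. v x)"
  unfolding push_def
  by (rule sum.mono_neutral_left) (use assms in \<open>auto simp: supp_def\<close>)

lemma supp_push: "supp (push f v) \<subseteq> f ` supp v"
proof
  fix y assume "y \<in> supp (push f v)"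
  then have "(\<Sum>x\<in>{x\<in>supp v. f x = y}. v x) \<noteq> 0" by (simp add: supp_def push_def)
  then obtain x where "x \<in> {x\<in>supp v. f x = y}"
    using sum.not_neutral_contains_not_neutral by blast
  then show "y \<in> f ` supp v" by auto
qed

lemma finite_supp_push: "finite (supp v) \<Longrightarrow> finite (supp (push f v))"
  by (rule finite_surj[OF _ supp_push])

lemma supp_add: "supp ((v::_\<Rightarrow>'k::field) + w) \<subseteq> supp v \<union> supp w" by (auto simp: supp_def)
lemma supp_diff: "supp ((v::_\<Rightarrow>'k::field) - w) \<subseteq> supp v \<union> supp w" by (auto simp: supp_def)
lemma supp_smult: "supp (\<lambda>z. c * (v::_\<Rightarrow>'k::field) z) \<subseteq> supp v" by (auto simp: supp_def)
lemma supp_zero[simp]: "supp 0 = {}" by (auto simp: supp_def)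
lemma supp_delta: "supp (delta x :: _ \<Rightarrow> 'k::zero_neq_one) = {x}" by (auto simp: supp_def delta_def)

lemma supp_sum_sub: "supp (\<Sum>i\<in>I. (g i :: _\<Rightarrow>'k::field)) \<subseteq> (\<Union>i\<in>I. supp (g i))"
proof
  fix x assume "x \<in> supp (\<Sum>i\<in>I. g i)"
  then have "(\<Sum>i\<in>I. g i x) \<noteq> 0" by (simp add: supp_def sum_fun_apply)
  then obtain i where "i \<in> I" "g i x \<noteq> 0" using sum.not_neutral_contains_not_neutral by blast
  then show "x \<in> (\<Union>i\<in>I. supp (g i))" by (auto simp: supp_def)
qed

lemma supp_zero'[simp]: "supp (\<lambda>a. 0) = {}" by (auto simp: supp_def)

lemma push_add:
  assumes "finite (supp (v::_\<Rightarrow>'k::field))" "finite (supp w)"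
  shows "push f (v + w) = push f v + push f w"
proof
  fix y
  let ?A = "supp v \<union> supp w"
  have "push f (v + w) y = (\<Sum>x\<in>{x\<in>?A. f x = y}. (v + w) x)"
    by (rule push_superset) (use assms supp_add[of v w] in auto)
  also have "\<dots> = (\<Sum>x\<in>{x\<in>?A. f x = y}. v x) + (\<Sum>x\<in>{x\<in>?A. f x = y}. w x)"
    by (simp add: sum.distrib)
  also have "\<dots> = push f v y + push f w y"
    using push_superset[of ?A v f y] push_superset[of ?A w f y] assms by auto
  finally show "push f (v + w) y = (push f v + push f w) y" by simp
qed

lemma push_smult:
  "push f (\<lambda>z. c * (v::_\<Rightarrow>'k::field) z) = (\<lambda>y. c * push f v y)"
proof
  fix y
  show "push f (\<lambda>z. c * v z) y = c * push f v y"
  proof (cases "c = 0")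
    case True then show ?thesis by (simp add: push_def supp_def)
  next
    case False
    then have "supp (\<lambda>z. c * v z) = supp v" by (auto simp: supp_def)
    then show ?thesis by (simp add: push_def sum_distrib_left)
  qed
qed

lemma push_zero[simp]: "push f 0 = 0"
  by (auto simp: push_def supp_def)

lemma push_zero'[simp]: "push f (\<lambda>a. 0) = (\<lambda>a. 0)"
  by (auto simp: push_def supp_def)

lemma push_uminus: "push f (- (v::_\<Rightarrow>'k::field)) = - push f v"
proof -
  have e: "- v = (\<lambda>z. (-1) * v z)" by auto
  have "push f (- v) = push f (\<lambda>z. (-1) * v z)" by (simp only: e)
  also have "\<dots> = (\<lambda>y. -1 * push f v y)" by (rule push_smult)
  finally show ?thesis by (simp add: fun_eq_iff)
qed

lemma push_diff:
  assumes "finite (supp (v::_\<Rightarrow>'k::field))" "finite (supp w)"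
  shows "push f (v - w) = push f v - push f w"
proof -
  have "finite (supp (- w))" using assms by (simp add: supp_def)
  then have "push f (v + - w) = push f v + push f (- w)" using push_add assms by blast
  then show ?thesis by (simp add: push_uminus)
qed

lemma push_sum:
  assumes "finite I" "\<And>i. i \<in> I \<Longrightarrow> finite (supp (g i :: _\<Rightarrow>'k::field))"
  shows "push f (\<Sum>i\<in>I. g i) = (\<Sum>i\<in>I. push f (g i))"
  using assms
proof (induction I rule: finite_induct)
  case empty then show ?case by simp
next
  case (insert i I)
  have fs: "finite (supp (\<Sum>i\<in>I. g i))"
  proof -
    have "supp (\<Sum>i\<in>I. g i) \<subseteq> (\<Union>i\<in>I. supp (g i))"
      by (rule supp_sum_sub)
    then show ?thesis using insert by (meson finite_UN_I finite_subset insertCI)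
  qed
  have "push f (sum g (insert i I)) = push f (g i + sum g I)" by (simp only: sum.insert[OF insert.hyps(1) insert.hyps(2)])
  also have "\<dots> = push f (g i) + push f (sum g I)" by (rule push_add) (use insert fs in auto)
  also have "push f (sum g I) = (\<Sum>i\<in>I. push f (g i))" using insert.IH insert.prems by blast
  finally show ?case by (simp only: sum.insert[OF insert.hyps(1) insert.hyps(2)])
qed

lemma push_comp:
  assumes "finite (supp v)"
  shows "push g (push f v) = push (g \<circ> f) v"
proof
  fix z
  have "push g (push f v) z = (\<Sum>y\<in>{y\<in>f ` supp v. g y = z}. push f v y)"
    by (rule push_superset) (use assms supp_push[of f v] in auto)
  also have "\<dots> = (\<Sum>y\<in>{y\<in>f ` supp v. g y = z}. \<Sum>x\<in>{x\<in>{x\<in>supp v. g (f x) = z}. f x = y}. v x)"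
    unfolding push_def by (rule sum.cong[OF refl], rule sum.cong) auto
  also have "\<dots> = (\<Sum>x\<in>{x\<in>supp v. g (f x) = z}. v x)"
    by (rule sum.group) (use assms in auto)
  also have "\<dots> = push (g \<circ> f) v z" by (simp add: push_def)
  finally show "push g (push f v) z = push (g \<circ> f) v z" .
qed

lemma push_delta: "push f (delta x :: _ \<Rightarrow> 'k::{comm_monoid_add,zero_neq_one}) = delta (f x)"
proof
  fix y
  have "supp (delta x :: _ \<Rightarrow> 'k) = {x}" by (rule supp_delta)
  then have "{x'\<in>supp (delta x :: _ \<Rightarrow> 'k). f x' = y} = (if f x = y then {x} else {})" by auto
  then show "push f (delta x :: _ \<Rightarrow> 'k) y = delta (f x) y"
    by (simp add: push_def delta_def)
qed

lemma push_at_image: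
  assumes "inj_on g A" "supp w \<subseteq> A" "finite (supp w)" "y \<in> A"
  shows "push g w (g y) = w y"
proof -
  have "push g w (g y) = (\<Sum>x\<in>{x\<in>A \<inter> (supp w \<union> {y}). g x = g y}. w x)"
    by (rule push_superset) (use assms in auto)
  also have "{x\<in>A \<inter> (supp w \<union> {y}). g x = g y} = {y}"
    using assms by (auto dest: inj_onD)
  finally show ?thesis by simp
qed

lemma push_outside:
  assumes "y \<notin> g ` supp w"
  shows "push g w y = 0"
  using assms supp_push[of g w] by (auto simp: supp_def)

definition pair :: "('x \<Rightarrow> 'k::field) \<Rightarrow> ('x \<Rightarrow> 'k) \<Rightarrow> 'k" where
  "pair \<chi> w = (\<Sum>x\<in>supp w. \<chi> x * w x)"

lemma pair_superset:
  assumes "finite A" "supp w \<subseteq> A"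
  shows "pair \<chi> w = (\<Sum>x\<in>A. \<chi> x * w x)"
  unfolding pair_def by (rule sum.mono_neutral_left) (use assms in \<open>auto simp: supp_def\<close>)

lemma pair_add:
  assumes "finite (supp v)" "finite (supp w)"
  shows "pair \<chi> (v + w) = pair \<chi> v + pair \<chi> w"
proof -
  let ?A = "supp v \<union> supp w"
  have "pair \<chi> (v + w) = (\<Sum>x\<in>?A. \<chi> x * (v + w) x)"
    by (rule pair_superset) (use assms supp_add[of v w] in auto)
  also have "\<dots> = (\<Sum>x\<in>?A. \<chi> x * v x) + (\<Sum>x\<in>?A. \<chi> x * w x)"
    by (simp add: sum.distrib distrib_left)
  finally show ?thesis using pair_superset[of ?A v \<chi>] pair_superset[of ?A w \<chi>] assms by auto
qed

lemma pair_smult: "pair \<chi> (\<lambda>z. c * v z) = c * pair \<chi> v"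
proof (cases "c = 0")
  case True then show ?thesis by (simp add: pair_def supp_def)
next
  case False
  then have "supp (\<lambda>z. c * v z) = supp v" by (auto simp: supp_def)
  then show ?thesis by (simp add: pair_def sum_distrib_left algebra_simps)
qed

lemma pair_zero[simp]: "pair \<chi> 0 = 0" by (simp add: pair_def)
lemma pair_zero'[simp]: "pair \<chi> (\<lambda>a. 0) = 0" by (simp add: pair_def)

lemma pair_diff:
  assumes "finite (supp v)" "finite (supp w)"
  shows "pair \<chi> (v - w) = pair \<chi> v - pair \<chi> w"
proof -
  have "finite (supp (- w))" using assms by (simp add: supp_def)
  have "- w = (\<lambda>z. (-1) * w z)" by auto
  then have "pair \<chi> (- w) = - pair \<chi> w" using pair_smult[of \<chi> "-1" w] by simp
  moreover have "pair \<chi> (v + - w) = pair \<chi> v + pair \<chi> (- w)"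
    using pair_add assms \<open>finite (supp (- w))\<close> by blast
  ultimately show ?thesis by simp
qed

lemma finite_supp_sum:
  assumes "finite I" "\<And>i. i \<in> I \<Longrightarrow> finite (supp (g i :: _\<Rightarrow>'k::field))"
  shows "finite (supp (\<Sum>i\<in>I. g i))"
proof -
  have "supp (\<Sum>i\<in>I. g i) \<subseteq> (\<Union>i\<in>I. supp (g i))"
    by (rule supp_sum_sub)
  then show ?thesis using assms by (meson finite_UN_I finite_subset)
qed


lemma pair_sum:
  assumes "finite I" "\<And>i. i \<in> I \<Longrightarrow> finite (supp (g i))"
  shows "pair \<chi> (\<Sum>i\<in>I. g i) = (\<Sum>i\<in>I. pair \<chi> (g i))"
  using assms
proof (induction I rule: finite_induct)
  case empty then show ?case by simp
next
  case (insert i I)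
  then have "finite (supp (\<Sum>i\<in>I. g i))" by (intro finite_supp_sum) auto
  note fs = this
  have "pair \<chi> (sum g (insert i I)) = pair \<chi> (g i + sum g I)" by (simp only: sum.insert[OF insert.hyps(1) insert.hyps(2)])
  also have "\<dots> = pair \<chi> (g i) + pair \<chi> (sum g I)" by (rule pair_add) (use insert fs in auto)
  also have "pair \<chi> (sum g I) = (\<Sum>i\<in>I. pair \<chi> (g i))" using insert.IH insert.prems by blast
  finally show ?case by (simp only: sum.insert[OF insert.hyps(1) insert.hyps(2)])
qed

lemma pair_push:
  assumes "finite (supp v)"
  shows "pair \<chi> (push f v) = pair (\<chi> \<circ> f) v"
proof -
  have "pair \<chi> (push f v) = (\<Sum>y\<in>f ` supp v. \<chi> y * push f v y)"
    by (rule pair_superset) (use assms supp_push[of f v] in auto)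
  also have "\<dots> = (\<Sum>y\<in>f ` supp v. \<Sum>x\<in>{x\<in>supp v. f x = y}. \<chi> (f x) * v x)"
    by (rule sum.cong) (auto simp: push_def sum_distrib_left intro!: sum.cong)
  also have "\<dots> = (\<Sum>x\<in>supp v. \<chi> (f x) * v x)"
    by (rule sum.group) (use assms in auto)
  finally show ?thesis by (simp add: pair_def)
qed

lemma lspan_diff: "v \<in> lspan G \<Longrightarrow> w \<in> lspan G \<Longrightarrow> v - w \<in> lspan G"
proof -
  assume "v \<in> lspan G" "w \<in> lspan G"
  from \<open>w \<in> lspan G\<close> have "(\<lambda>z. (-1) * w z) \<in> lspan G" by (rule lspan.smult)
  then have "v + (\<lambda>z. (-1) * w z) \<in> lspan G" using \<open>v \<in> lspan G\<close> lspan.add by blast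
  moreover have "v + (\<lambda>z. (-1) * w z) = v - w" by (auto simp: fun_eq_iff)
  ultimately show ?thesis by simp
qed

lemma lspan_sum: "finite I \<Longrightarrow> (\<And>i. i \<in> I \<Longrightarrow> g i \<in> lspan G) \<Longrightarrow> (\<Sum>i\<in>I. g i) \<in> lspan G"
proof (induction I rule: finite_induct)
  case empty show ?case by (simp only: sum.empty lspan.zero)
next
  case (insert i I)
  have a: "g i \<in> lspan G" using insert.prems by blast
  have b: "sum g I \<in> lspan G" using insert.IH insert.prems by blast
  from a b have "g i + sum g I \<in> lspan G" by (rule lspan.add)
  then show ?case by (simp only: sum.insert[OF insert.hyps(1) insert.hyps(2)])
qed



lemma lspan_finite:
  assumes "v \<in> lspan G" "\<And>g. g \<in> G \<Longrightarrow> finite (supp g)"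
  shows "finite (supp v)"
  using assms
proof (induction v rule: lspan.induct)
  case zero then show ?case by (simp only: supp_zero finite.emptyI)
next
  case (add v w) then show ?case using supp_add finite_subset by (metis finite_Un)
next
  case (smult v c) then show ?case using supp_smult finite_subset by metis
next
  case (gen g) then show ?case by simp
qed

lemma lspan_pair:
  assumes "v \<in> lspan G" "\<And>g. g \<in> G \<Longrightarrow> finite (supp g)" "\<And>g. g \<in> G \<Longrightarrow> pair \<chi> g = 0"
  shows "pair \<chi> v = 0"
  using assms
proof (induction v rule: lspan.induct)
  case zero then show ?case by (simp only: pair_zero)
next
  case (add v w)
  then show ?case using lspan_finite pair_add by (metis add.right_neutral)
next
  case (smult v c) then show ?case by (simp add: pair_smult)
next
  case (gen g) then show ?case by simp
qed

lemma lspan_map: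
  assumes "v \<in> lspan G" "\<And>g. g \<in> G \<Longrightarrow> finite (supp g)"
    and "\<And>g. g \<in> G \<Longrightarrow> L g \<in> lspan G'"
    and "\<And>v w. finite (supp v) \<Longrightarrow> finite (supp w) \<Longrightarrow> L (v + w) = L v + L w"
    and "\<And>v c. L (\<lambda>z. c * v z) = (\<lambda>y. c * L v y)"
  shows "L v \<in> lspan G'"
  using assms(1)
proof (induction v rule: lspan.induct)
  case zero
  have "L (\<lambda>z. 0 * (0::'a \<Rightarrow> 'b) z) = (\<lambda>y. 0 * L 0 y)" by (rule assms(5))
  then have "L (\<lambda>z. 0) = (\<lambda>y. 0)" by (simp only: mult_zero_left)
  then have "L 0 = 0" by (simp only: zero_fun_def[symmetric])
  then show ?case using lspan.zero by metis
next
  case (add v w)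
  then show ?case using assms lspan_finite by (metis lspan.add)
next
  case (smult v c) then show ?case using assms(5) lspan.smult by metis
next
  case (gen g) then show ?case using assms(3) by simp
qed


lemma finite_nset[simp]: "finite (nset n)" by (simp add: nset_def)
lemma card_nset[simp]: "card (nset n) = n" by (simp add: nset_def)

lemma std_mono:
  assumes "finite S" "i \<in> S" "i' \<in> S" "i < i'"
  shows "std S i < std S i'"
proof -
  have "{j\<in>S. j < i} \<subset> {j\<in>S. j < i'}" using assms by auto
  then have "card {j\<in>S. j < i} < card {j\<in>S. j < i'}"
    by (rule psubset_card_mono[rotated]) (use assms in auto)
  then show ?thesis by (simp add: std_def)
qed

lemma std_inj: "finite S \<Longrightarrow> inj_on (std S) S"
  by (rule inj_onI) (metis linorder_neqE_nat std_mono less_irrefl)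

lemma std_range:
  assumes "finite S" "i \<in> S"
  shows "std S i \<in> nset (card S)"
proof -
  have "{j\<in>S. j < i} \<subset> S" using assms by auto
  then have "card {j\<in>S. j < i} < card S" using assms psubset_card_mono by blast
  then show ?thesis by (simp add: std_def nset_def)
qed

lemma std_image: assumes "finite S" shows "std S ` S = nset (card S)"
proof -
  have sub: "std S ` S \<subseteq> nset (card S)" using std_range assms by blast
  have "card (std S ` S) = card S" using card_image std_inj assms by blast
  then show ?thesis using card_subset_eq[OF finite_nset sub] by simp
qed

lemma std_bij: "finite S \<Longrightarrow> bij_betw (std S) S (nset (card S))"
  by (simp add: bij_betw_def std_inj std_image)

lemma glue_permutes:
  assumes "S' \<inter> T' = {}" "S \<inter> T = {}" "S' \<union> T' = N" "S \<union> T = N"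
    and "bij_betw \<phi>1 S' S" "bij_betw \<phi>2 T' T"
  shows "(\<lambda>i. if i \<in> S' then \<phi>1 i else if i \<in> T' then \<phi>2 i else i) permutes N"
    (is "?p permutes N")
proof (rule bij_imp_permutes)
  have "bij_betw ?p S' S" using assms(5) by (rule bij_betw_cong[THEN iffD1, rotated]) auto
  moreover have "bij_betw ?p T' T" using assms(6) by (rule bij_betw_cong[THEN iffD1, rotated]) (use assms(1) in auto)
  ultimately have "bij_betw ?p (S' \<union> T') (S \<union> T)"
    by (rule bij_betw_combine) (use assms in auto)
  then show "bij_betw ?p N N" using assms by simp
  show "\<And>x. x \<notin> N \<Longrightarrow> ?p x = x" using assms by auto
qed

locale spc =
  fixes H :: "nat set \<Rightarrow> 'a set" and le :: "nat set \<Rightarrow> 'a \<Rightarrow> 'a \<Rightarrow> bool"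
    and rl :: "(nat \<Rightarrow> nat) \<Rightarrow> nat set \<Rightarrow> 'a \<Rightarrow> 'a"
  assumes sp: "poset_species H le rl"
begin

lemmas spd = sp[unfolded poset_species_def]
lemmas sp2 = spd[THEN conjunct2, THEN conjunct1]
lemmas sp3 = spd[THEN conjunct2, THEN conjunct2, THEN conjunct1]
lemmas sp4 = spd[THEN conjunct2, THEN conjunct2, THEN conjunct2, THEN conjunct1]
lemmas sp5 = spd[THEN conjunct2, THEN conjunct2, THEN conjunct2, THEN conjunct2, THEN conjunct1]
lemmas sp6 = spd[THEN conjunct2, THEN conjunct2, THEN conjunct2, THEN conjunct2, THEN conjunct2, THEN conjunct1]
lemmas sp7 = spd[THEN conjunct2, THEN conjunct2, THEN conjunct2, THEN conjunct2, THEN conjunct2, THEN conjunct2]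

lemma refl: "finite I \<Longrightarrow> x \<in> H I \<Longrightarrow> le I x x"
  by (drule sp2[rule_format, THEN conjunct1]) blast
lemma antisym: "finite I \<Longrightarrow> x \<in> H I \<Longrightarrow> y \<in> H I \<Longrightarrow> le I x y \<Longrightarrow> le I y x \<Longrightarrow> x = y"
  by (drule sp2[rule_format, THEN conjunct2, THEN conjunct1]) blast
lemma trans: "finite I \<Longrightarrow> x \<in> H I \<Longrightarrow> y \<in> H I \<Longrightarrow> z \<in> H I \<Longrightarrow> le I x y \<Longrightarrow> le I y z \<Longrightarrow> le I x z"
  by (drule sp2[rule_format, THEN conjunct2, THEN conjunct2, THEN conjunct1]) blast
lemma locfin: "finite I \<Longrightarrow> x \<in> H I \<Longrightarrow> y \<in> H I \<Longrightarrow> finite {z\<in>H I. le I x z \<and> le I z y}"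
  by (drule sp2[rule_format, THEN conjunct2, THEN conjunct2, THEN conjunct2]) blast
lemma rl_in: "finite I \<Longrightarrow> inj_on \<sigma> I \<Longrightarrow> x \<in> H I \<Longrightarrow> rl \<sigma> I x \<in> H (\<sigma> ` I)"
  using sp3 by simp
lemma rl_cong: "finite I \<Longrightarrow> x \<in> H I \<Longrightarrow> (\<And>i. i \<in> I \<Longrightarrow> \<sigma> i = \<tau> i) \<Longrightarrow> rl \<sigma> I x = rl \<tau> I x"
  using sp4 by simp
lemma rl_id: "finite I \<Longrightarrow> x \<in> H I \<Longrightarrow> rl id I x = x"
  using sp5 by simp
lemma rl_comp: "finite I \<Longrightarrow> inj_on \<sigma> I \<Longrightarrow> inj_on \<tau> (\<sigma> ` I) \<Longrightarrow> x \<in> H I \<Longrightarrow>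
    rl \<tau> (\<sigma> ` I) (rl \<sigma> I x) = rl (\<tau> \<circ> \<sigma>) I x"
  using sp6 by simp
lemma rl_mono: "finite I \<Longrightarrow> inj_on \<sigma> I \<Longrightarrow> x \<in> H I \<Longrightarrow> y \<in> H I \<Longrightarrow> le I x y \<Longrightarrow>
    le (\<sigma> ` I) (rl \<sigma> I x) (rl \<sigma> I y)"
  using sp7 by simp

lemma rl_in': "finite I \<Longrightarrow> bij_betw \<sigma> I J \<Longrightarrow> x \<in> H I \<Longrightarrow> rl \<sigma> I x \<in> H J"
  using rl_in by (metis bij_betw_def)

lemma rl_inv:
  assumes "finite I" "bij_betw \<sigma> I J" "x \<in> H I"
  shows "rl (the_inv_into I \<sigma>) J (rl \<sigma> I x) = x"
proof -
  have J: "J = \<sigma> ` I" and inj: "inj_on \<sigma> I" using assms(2) by (auto simp: bij_betw_def)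
  have "inj_on (the_inv_into I \<sigma>) (\<sigma> ` I)" using inj by (simp add: inj_on_the_inv_into)
  then have "rl (the_inv_into I \<sigma>) J (rl \<sigma> I x) = rl (the_inv_into I \<sigma> \<circ> \<sigma>) I x"
    using rl_comp assms inj J by blast
  also have "\<dots> = rl id I x" by (rule rl_cong) (use assms inj in \<open>auto simp: the_inv_into_f_f\<close>)
  finally show ?thesis using rl_id assms by simp
qed

lemma rl_inj:
  assumes "finite I" "bij_betw \<sigma> I J"
  shows "inj_on (rl \<sigma> I) (H I)"
  by (rule inj_on_inverseI[where g="rl (the_inv_into I \<sigma>) J"]) (use rl_inv assms in auto)

lemma rl_bij:
  assumes "finite I" "bij_betw \<sigma> I J"
  shows "bij_betw (rl \<sigma> I) (H I) (H J)"
proof -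
  have fJ: "finite J" using assms bij_betw_finite by blast
  have bi: "bij_betw (the_inv_into I \<sigma>) J I" using assms(2) by (rule bij_betw_the_inv_into)
  have "H J \<subseteq> rl \<sigma> I ` H I"
  proof
    fix y assume y: "y \<in> H J"
    have "rl \<sigma> I (rl (the_inv_into J (the_inv_into I \<sigma>)) I (rl (the_inv_into I \<sigma>) J y))
        = rl \<sigma> I (y')" if "y' = rl (the_inv_into J (the_inv_into I \<sigma>)) I (rl (the_inv_into I \<sigma>) J y)" for y'
      using that by simp
    have "rl (the_inv_into I \<sigma>) J y \<in> H I" using rl_in' fJ bi y by blast
    moreover have "rl \<sigma> I (rl (the_inv_into I \<sigma>) J y) = y"
    proof -
      have "rl \<sigma> I (rl (the_inv_into I \<sigma>) J y) = rl (\<sigma> \<circ> the_inv_into I \<sigma>) J y"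
        using rl_comp[of J "the_inv_into I \<sigma>" \<sigma> y] fJ bi y assms(2)
        by (metis bij_betw_def bij_betw_imp_inj_on)
      also have "\<dots> = rl id J y"
        by (rule rl_cong) (use fJ y assms(2) in \<open>auto simp: f_the_inv_into_f_bij_betw\<close>)
      finally show ?thesis using rl_id fJ y by simp
    qed
    ultimately show "y \<in> rl \<sigma> I ` H I" by (metis image_eqI)
  qed
  moreover have "rl \<sigma> I ` H I \<subseteq> H J" using rl_in' assms by blast
  ultimately show ?thesis using rl_inj assms by (auto simp: bij_betw_def)
qed

lemma rl_le_iff:
  assumes "finite I" "bij_betw \<sigma> I J" "x \<in> H I" "y \<in> H I"
  shows "le J (rl \<sigma> I x) (rl \<sigma> I y) \<longleftrightarrow> le I x y"
proof
  assume "le I x y" then show "le J (rl \<sigma> I x) (rl \<sigma> I y)"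
    using rl_mono assms by (metis bij_betw_def)
next
  have fJ: "finite J" using assms bij_betw_finite by blast
  have bi: "bij_betw (the_inv_into I \<sigma>) J I" using assms(2) by (rule bij_betw_the_inv_into)
  assume "le J (rl \<sigma> I x) (rl \<sigma> I y)"
  then have "le I (rl (the_inv_into I \<sigma>) J (rl \<sigma> I x)) (rl (the_inv_into I \<sigma>) J (rl \<sigma> I y))"
    using rl_mono[of J "the_inv_into I \<sigma>"] fJ bi rl_in' assms by (metis bij_betw_def)
  then show "le I x y" using rl_inv assms by simp
qed

lemma relabel_factor:
  assumes "finite S" "bij_betw \<phi> S S'" "y \<in> H S"
  defines "\<alpha> \<equiv> std S' \<circ> \<phi> \<circ> the_inv_into S (std S)"
  shows "rl (std S') S' (rl \<phi> S y) = rl \<alpha> (nset (card S)) (rl (std S) S y)"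
    and "bij_betw \<alpha> (nset (card S)) (nset (card S))"
proof -
  have fS': "finite S'" using assms bij_betw_finite by blast
  have cS: "card S' = card S" using assms bij_betw_same_card by metis
  have b1: "bij_betw (the_inv_into S (std S)) (nset (card S)) S"
    using std_bij[OF assms(1)] by (rule bij_betw_the_inv_into)
  have b3: "bij_betw (std S') S' (nset (card S))" using std_bij[OF fS'] cS by simp
  show bA: "bij_betw \<alpha> (nset (card S)) (nset (card S))"
    unfolding \<alpha>_def using b1 assms(2) b3 by (intro bij_betw_trans) auto
  have "rl \<alpha> (nset (card S)) (rl (std S) S y) = rl (\<alpha> \<circ> std S) S y"
    using rl_comp[of S "std S" \<alpha> y] assms(1,3) std_inj std_image bA by (metis bij_betw_def)
  also have "\<dots> = rl (std S' \<circ> \<phi>) S y"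
    by (rule rl_cong) (use assms std_bij in \<open>auto simp: \<alpha>_def the_inv_into_f_f std_inj\<close>)
  also have "\<dots> = rl (std S') (\<phi> ` S) (rl \<phi> S y)"
    using rl_comp[of S \<phi> "std S'" y] assms std_inj fS' by (metis bij_betw_def)
  finally show "rl (std S') S' (rl \<phi> S y) = rl \<alpha> (nset (card S)) (rl (std S) S y)"
    using assms(2) by (simp add: bij_betw_def)
qed

end


locale spd = spc H le rl for H :: "nat set \<Rightarrow> 'a set" and le rl +
  fixes D :: "nat set \<Rightarrow> nat set \<Rightarrow> 'a \<Rightarrow> 'a \<times> 'a"
  assumes cm: "poset_comonoid H le rl D"
begin

lemmas cmd = cm[unfolded poset_comonoid_def]

lemma D_in:
  assumes "finite S" "finite T" "S \<inter> T = {}" "x \<in> H (S \<union> T)"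
  shows "fst (D S T x) \<in> H S" "snd (D S T x) \<in> H T"
  using cmd[THEN conjunct1] assms by simp_all

lemma D_mono:
  assumes "finite S" "finite T" "S \<inter> T = {}" "x \<in> H (S \<union> T)" "x' \<in> H (S \<union> T)" "le (S \<union> T) x x'"
  shows "le S (fst (D S T x)) (fst (D S T x'))" "le T (snd (D S T x)) (snd (D S T x'))"
  using cmd[THEN conjunct2, THEN conjunct1] assms by simp_all

lemma D_nat:
  assumes "finite S" "finite T" "S \<inter> T = {}" "x \<in> H (S \<union> T)" "inj_on \<sigma> (S \<union> T)"
  shows "D (\<sigma> ` S) (\<sigma> ` T) (rl \<sigma> (S \<union> T) x) = (rl \<sigma> S (fst (D S T x)), rl \<sigma> T (snd (D S T x)))"
  using cmd[THEN conjunct2, THEN conjunct2, THEN conjunct1] assms by simp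

definition fmap :: "nat \<Rightarrow> nat set \<Rightarrow> 'a \<Rightarrow> 'a \<times> 'a" where
  "fmap n S = (\<lambda>x. (rl (std S) S (fst (D S (nset n - S) x)),
                    rl (std (nset n - S)) (nset n - S) (snd (D S (nset n - S) x))))"

definition Sub :: "nat \<Rightarrow> nat \<Rightarrow> nat set set" where
  "Sub n a = {S. S \<subseteq> nset n \<and> card S = a}"

lemma finite_Sub: "finite (Sub n a)"
  unfolding Sub_def by (rule finite_subset[of _ "Pow (nset n)"]) auto

lemma fock_comp_eq: "fock_comp rl D n a v = (\<Sum>S\<in>Sub n a. push (fmap n S) v)"
  by (simp add: fock_comp_def fun_eq_iff sum_fun_apply Sub_def fmap_def)

lemma fmap_in:
  assumes "S \<subseteq> nset n" "x \<in> H (nset n)"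
  shows "fmap n S x \<in> H (nset (card S)) \<times> H (nset (n - card S))"
proof -
  have fS: "finite S" using assms(1) by (rule finite_subset) simp
  have u: "S \<union> (nset n - S) = nset n" using assms by auto
  have x: "x \<in> H (S \<union> (nset n - S))" using u assms by simp
  have c: "card (nset n - S) = n - card S" using assms fS by (simp add: card_Diff_subset)
  have fT: "finite (nset n - S)" by simp
  have dj: "S \<inter> (nset n - S) = {}" by auto
  have d1: "fst (D S (nset n - S) x) \<in> H S" by (rule D_in(1)[OF fS fT dj x])
  have d2: "snd (D S (nset n - S) x) \<in> H (nset n - S)" by (rule D_in(2)[OF fS fT dj x])
  have r1: "rl (std S) S (fst (D S (nset n - S) x)) \<in> H (nset (card S))"
    by (rule rl_in'[OF fS std_bij[OF fS] d1])
  have r2: "rl (std (nset n - S)) (nset n - S) (snd (D S (nset n - S) x)) \<in> H (nset (card (nset n - S)))"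
    by (rule rl_in'[OF fT std_bij[OF fT] d2])
  show ?thesis unfolding fmap_def using r1 r2 c by simp
qed

lemma fmap_relabel:
  assumes "S \<subseteq> nset n" "x \<in> H (nset n)" "bij_betw \<sigma> (nset n) (nset n)"
  shows "\<exists>\<alpha> \<beta>. bij_betw \<alpha> (nset (card S)) (nset (card S)) \<and>
           bij_betw \<beta> (nset (n - card S)) (nset (n - card S)) \<and>
           fmap n (\<sigma> ` S) (rl \<sigma> (nset n) x) =
             (rl \<alpha> (nset (card S)) (fst (fmap n S x)), rl \<beta> (nset (n - card S)) (snd (fmap n S x)))"
proof -
  let ?N = "nset n" let ?T = "nset n - S"
  have fS: "finite S" using assms(1) by (rule finite_subset) simp
  have fT: "finite ?T" by simp
  have u: "S \<union> ?T = ?N" using assms by auto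
  have x: "x \<in> H (S \<union> ?T)" using u assms by simp
  have c: "card ?T = n - card S" using assms fS by (simp add: card_Diff_subset)
  have inj: "inj_on \<sigma> (S \<union> ?T)" using assms u by (simp add: bij_betw_def)
  have img: "\<sigma> ` (S \<union> ?T) = ?N" using assms u by (simp add: bij_betw_def)
  have injN: "inj_on \<sigma> ?N" and imN: "\<sigma> ` ?N = ?N" using assms(3) by (auto simp: bij_betw_def)
  have "\<sigma> ` (?N - S) = \<sigma> ` ?N - \<sigma> ` S" by (rule inj_on_image_set_diff[OF injN _ assms(1)]) auto
  then have Tsig: "?N - \<sigma> ` S = \<sigma> ` ?T" using imN by simp
  have bS: "bij_betw \<sigma> S (\<sigma> ` S)" using inj by (meson inj_on_Un inj_on_imp_bij_betw)
  have bT: "bij_betw \<sigma> ?T (\<sigma> ` ?T)" using inj by (meson inj_on_Un inj_on_imp_bij_betw)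
  have dn: "D (\<sigma> ` S) (\<sigma> ` ?T) (rl \<sigma> (S \<union> ?T) x) =
      (rl \<sigma> S (fst (D S ?T x)), rl \<sigma> ?T (snd (D S ?T x)))"
    by (rule D_nat[OF fS fT _ x inj]) auto
  have y0: "fst (D S ?T x) \<in> H S" and z0: "snd (D S ?T x) \<in> H ?T"
    using D_in[OF fS fT _ x] by auto
  obtain \<alpha> where a1: "rl (std (\<sigma> ` S)) (\<sigma> ` S) (rl \<sigma> S (fst (D S ?T x))) =
      rl \<alpha> (nset (card S)) (rl (std S) S (fst (D S ?T x)))" and a2: "bij_betw \<alpha> (nset (card S)) (nset (card S))"
    using relabel_factor[OF fS bS y0] by blast
  obtain \<beta> where b1: "rl (std (\<sigma> ` ?T)) (\<sigma> ` ?T) (rl \<sigma> ?T (snd (D S ?T x))) =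
      rl \<beta> (nset (card ?T)) (rl (std ?T) ?T (snd (D S ?T x)))" and b2: "bij_betw \<beta> (nset (card ?T)) (nset (card ?T))"
    using relabel_factor[OF fT bT z0] by blast
  have "fmap n (\<sigma> ` S) (rl \<sigma> ?N x) =
      (rl (std (\<sigma> ` S)) (\<sigma> ` S) (rl \<sigma> S (fst (D S ?T x))), rl (std (\<sigma> ` ?T)) (\<sigma> ` ?T) (rl \<sigma> ?T (snd (D S ?T x))))"
    unfolding fmap_def Tsig using dn u by simp
  then show ?thesis using a1 a2 b1 b2 c by (intro exI[of _ \<alpha>] exI[of _ \<beta>]) (simp add: fmap_def)
qed

lemma fin_delta: "finite (supp (delta x :: _ \<Rightarrow> 'k::field))" by (simp add: supp_delta)

lemma tensor_gen:
  assumes "y \<in> H (nset a)" "z \<in> H (nset b)" "bij_betw \<alpha> (nset a) (nset a)" "bij_betw \<beta> (nset b) (nset b)"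
  shows "(delta (y, z) - delta (rl \<alpha> (nset a) y, rl \<beta> (nset b) z) :: _ \<Rightarrow> 'k::field) \<in> tensor_ker H rl a b"
proof -
  let ?G = "{delta (y, z) - delta (rl \<sigma> (nset a) y, z) | y z \<sigma>.
         y \<in> H (nset a) \<and> z \<in> H (nset b) \<and> bij_betw \<sigma> (nset a) (nset a)} \<union>
      {delta (y, z) - delta (y, rl \<tau> (nset b) z) | y z \<tau>.
         y \<in> H (nset a) \<and> z \<in> H (nset b) \<and> bij_betw \<tau> (nset b) (nset b)}"
  have ya: "rl \<alpha> (nset a) y \<in> H (nset a)" using rl_in' assms by simp
  have g1: "(delta (y, z) - delta (rl \<alpha> (nset a) y, z) :: _ \<Rightarrow> 'k) \<in> ?G" using assms by blast
  have g2: "(delta (rl \<alpha> (nset a) y, z) - delta (rl \<alpha> (nset a) y, rl \<beta> (nset b) z) :: _ \<Rightarrow> 'k) \<in> ?G"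
    using assms ya by blast
  have "(delta (y, z) - delta (rl \<alpha> (nset a) y, z) :: _ \<Rightarrow> 'k) + (delta (rl \<alpha> (nset a) y, z) - delta (rl \<alpha> (nset a) y, rl \<beta> (nset b) z)) \<in> lspan ?G"
    by (intro lspan.add lspan.gen g1 g2)
  then show ?thesis unfolding tensor_ker_def by simp
qed

lemma fock_comp_add:
  assumes "finite (supp v)" "finite (supp (w :: _ \<Rightarrow> 'k::field))"
  shows "fock_comp rl D n a (v + w) = fock_comp rl D n a v + fock_comp rl D n a w"
  unfolding fock_comp_eq using assms by (simp add: push_add sum.distrib)

lemma fock_comp_smult:
  "fock_comp rl D n a (\<lambda>z. c * (v :: _ \<Rightarrow> 'k::field) z) = (\<lambda>y. c * fock_comp rl D n a v y)"
  unfolding fock_comp_eq by (simp add: push_smult sum_fun_apply sum_distrib_left fun_eq_iff)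

lemma fock_comp_diff:
  assumes "finite (supp v)" "finite (supp (w :: _ \<Rightarrow> 'k::field))"
  shows "fock_comp rl D n a (v - w) = fock_comp rl D n a v - fock_comp rl D n a w"
  unfolding fock_comp_eq using assms by (simp add: push_diff sum_subtractf)

lemma coinv_gen_finite:
  "g \<in> {delta x - delta (rl \<sigma> (nset n) x) | x \<sigma>. x \<in> H (nset n) \<and> bij_betw \<sigma> (nset n) (nset n)}
   \<Longrightarrow> finite (supp (g :: _ \<Rightarrow> 'k::field))"
  using supp_diff fin_delta by (smt (verit, best) finite_Un finite_subset mem_Collect_eq)

lemma coinv_finite: "w \<in> coinv_ker H rl n \<Longrightarrow> finite (supp (w :: _ \<Rightarrow> 'k::field))"
  unfolding coinv_ker_def using lspan_finite coinv_gen_finite by blast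

lemma lspan_map':
  assumes "K = lspan G'" "v \<in> lspan G" "\<And>g. g \<in> G \<Longrightarrow> finite (supp g)"
    and "\<And>g. g \<in> G \<Longrightarrow> L g \<in> K"
    and "\<And>v w. finite (supp v) \<Longrightarrow> finite (supp w) \<Longrightarrow> L (v + w) = L v + L w"
    and "\<And>v c. L (\<lambda>z. c * v z) = (\<lambda>y. c * L v y)"
  shows "L v \<in> K"
  using lspan_map[of v G L G'] assms by blast

lemma tensor_ker_sum:
  "finite I \<Longrightarrow> (\<And>i. i \<in> I \<Longrightarrow> g i \<in> tensor_ker H rl a b) \<Longrightarrow> (\<Sum>i\<in>I. g i) \<in> tensor_ker H rl a b"
  unfolding tensor_ker_def by (rule lspan_sum)

lemma fock_comp_ker:
  assumes "w \<in> coinv_ker H rl n"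
  shows "fock_comp rl D n a (w :: _ \<Rightarrow> 'k::field) \<in> tensor_ker H rl a (n - a)"
  using assms unfolding coinv_ker_def
proof (rule lspan_map'[OF tensor_ker_def])
  show "\<And>g. g \<in> {delta x - delta (rl \<sigma> (nset n) x) | x \<sigma>. x \<in> H (nset n) \<and> bij_betw \<sigma> (nset n) (nset n)}
     \<Longrightarrow> finite (supp (g :: _ \<Rightarrow> 'k::field))" by (rule coinv_gen_finite)
  show "\<And>v w. finite (supp v) \<Longrightarrow> finite (supp (w :: _ \<Rightarrow> 'k)) \<Longrightarrow>
    fock_comp rl D n a (v + w) = fock_comp rl D n a v + fock_comp rl D n a w" by (rule fock_comp_add)
  show "\<And>v c. fock_comp rl D n a (\<lambda>z. c * (v :: _ \<Rightarrow> 'k) z) = (\<lambda>y. c * fock_comp rl D n a v y)"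
    by (rule fock_comp_smult)
  fix g :: "'a \<Rightarrow> 'k" assume "g \<in> {delta x - delta (rl \<sigma> (nset n) x) | x \<sigma>. x \<in> H (nset n) \<and> bij_betw \<sigma> (nset n) (nset n)}"
  then obtain x \<sigma> where g: "g = delta x - delta (rl \<sigma> (nset n) x)" and x: "x \<in> H (nset n)"
    and \<sigma>: "bij_betw \<sigma> (nset n) (nset n)" by blast
  let ?N = "nset n"
  have fc: "fock_comp rl D n a g = (\<Sum>S\<in>Sub n a. delta (fmap n S x)) - (\<Sum>S\<in>Sub n a. delta (fmap n S (rl \<sigma> ?N x)))"
    unfolding g fock_comp_eq by (simp add: push_diff fin_delta push_delta sum_subtractf)
  have bijS: "bij_betw (\<lambda>S. \<sigma> ` S) (Sub n a) (Sub n a)"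
  proof -
    have "bij_betw (image \<sigma>) (Pow ?N) (Pow ?N)" using \<sigma> by (rule bij_betw_Pow)
    then have i: "inj_on (image \<sigma>) (Sub n a)" unfolding Sub_def bij_betw_def
      by (rule inj_on_subset[OF conjunct1]) auto
    have "image \<sigma> ` Sub n a \<subseteq> Sub n a"
    proof
      fix S' assume "S' \<in> image \<sigma> ` Sub n a"
      then obtain S where S: "S \<subseteq> ?N" "card S = a" "S' = \<sigma> ` S" by (auto simp: Sub_def)
      have "inj_on \<sigma> S" using \<sigma> S(1) by (meson bij_betw_def inj_on_subset)
      then have "card S' = a" using S card_image by blast
      moreover have "S' \<subseteq> ?N" using S \<sigma> by (auto simp: bij_betw_def)
      ultimately show "S' \<in> Sub n a" by (simp add: Sub_def)
    qed
    moreover have "card (image \<sigma> ` Sub n a) = card (Sub n a)" using i card_image by blast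
    ultimately have "image \<sigma> ` Sub n a = Sub n a" using finite_Sub card_subset_eq by blast
    then show ?thesis using i by (simp add: bij_betw_def)
  qed
  have "(\<Sum>S\<in>Sub n a. delta (fmap n (\<sigma> ` S) (rl \<sigma> ?N x)) :: _ \<Rightarrow> 'k) =
        (\<Sum>S\<in>Sub n a. delta (fmap n S (rl \<sigma> ?N x)))"
    using sum.reindex_bij_betw[OF bijS, of "\<lambda>S. delta (fmap n S (rl \<sigma> ?N x))"] by simp
  then have fc2: "fock_comp rl D n a g = (\<Sum>S\<in>Sub n a. (delta (fmap n S x) - delta (fmap n (\<sigma> ` S) (rl \<sigma> ?N x)) :: _ \<Rightarrow> 'k))"
    using fc by (simp add: sum_subtractf del: sum.cong)
  show "fock_comp rl D n a g \<in> tensor_ker H rl a (n - a)"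
    unfolding fc2
  proof (rule tensor_ker_sum)
    show "finite (Sub n a)" by (rule finite_Sub)
    fix S assume S: "S \<in> Sub n a"
    then have Sn: "S \<subseteq> ?N" and ca: "card S = a" by (auto simp: Sub_def)
    obtain \<alpha> \<beta> where ab: "bij_betw \<alpha> (nset a) (nset a)" "bij_betw \<beta> (nset (n - a)) (nset (n - a))"
      and eq: "fmap n (\<sigma> ` S) (rl \<sigma> ?N x) = (rl \<alpha> (nset a) (fst (fmap n S x)), rl \<beta> (nset (n - a)) (snd (fmap n S x)))"
      using fmap_relabel[OF Sn x \<sigma>] ca by blast
    have "fmap n S x \<in> H (nset a) \<times> H (nset (n - a))" using fmap_in[OF Sn x] ca by simp
    then show "(delta (fmap n S x) - delta (fmap n (\<sigma> ` S) (rl \<sigma> ?N x)) :: _ \<Rightarrow> 'k) \<in> tensor_ker H rl a (n - a)"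
      unfolding eq using tensor_gen[OF _ _ ab] by (metis mem_Times_iff prod.collapse)
  qed
qed

end


lemma pair_delta: "pair \<chi> (delta x :: _ \<Rightarrow> 'k::field) = \<chi> x"
  unfolding pair_def supp_delta by (simp add: delta_def)

lemma push_equivariant:
  assumes "finite (supp (p :: _ \<Rightarrow> 'k::field))" "supp p \<subseteq> A" "bij_betw \<rho> A A"
    and "\<And>x. x \<in> A \<Longrightarrow> p (\<rho> x) = p x" and "\<And>x. x \<in> A \<Longrightarrow> f (\<rho> x) = g (f x)"
    and "inj_on g B" "f ` A \<subseteq> B" "w \<in> B"
  shows "push f p (g w) = push f p w"
proof -
  have bij: "bij_betw \<rho> {x\<in>supp p. f x = w} {x\<in>supp p. f x = g w}"
  proof (rule bij_betw_imageI)
    show "inj_on \<rho> {x \<in> supp p. f x = w}"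
    proof -
      have "inj_on \<rho> A" using assms(3) bij_betw_imp_inj_on by blast
      then show ?thesis by (rule inj_on_subset) (use assms(2) in auto)
    qed
    show "\<rho> ` {x \<in> supp p. f x = w} = {x \<in> supp p. f x = g w}"
    proof
      show "\<rho> ` {x \<in> supp p. f x = w} \<subseteq> {x \<in> supp p. f x = g w}"
        using assms(2,4,5) by (auto simp: supp_def)
      show "{x \<in> supp p. f x = g w} \<subseteq> \<rho> ` {x \<in> supp p. f x = w}"
      proof
        fix x' assume x': "x' \<in> {x \<in> supp p. f x = g w}"
        then have "x' \<in> A" using assms(2) by auto
        then obtain x where x: "x \<in> A" "x' = \<rho> x" using assms(3) by (auto simp: bij_betw_def)
        have "p x = p x'" using x assms(4) by simp
        then have "x \<in> supp p" using x' by (simp add: supp_def)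
        have "g (f x) = g w" using x x' assms(5) by simp
        then have "f x = w" using assms(6,7,8) x inj_onD by fastforce
        then show "x' \<in> \<rho> ` {x \<in> supp p. f x = w}" using x \<open>x \<in> supp p\<close> by blast
      qed
    qed
  qed
  have "push f p (g w) = (\<Sum>x\<in>{x\<in>supp p. f x = g w}. p x)" by (simp add: push_def)
  also have "\<dots> = (\<Sum>x\<in>{x\<in>supp p. f x = w}. p (\<rho> x))"
    using sum.reindex_bij_betw[OF bij, of p] by simp
  also have "\<dots> = (\<Sum>x\<in>{x\<in>supp p. f x = w}. p x)"
    by (rule sum.cong) (use assms(2,4) in auto)
  finally show ?thesis by (simp add: push_def)
qed

context spd begin

lemma rl_factor2:
  assumes "finite S'" "y0 \<in> H S'" "inj_on \<pi> S'" "S = \<pi> ` S'"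
    and "bij_betw \<alpha> (nset (card S')) (nset (card S'))" "\<forall>i\<in>S'. std S (\<pi> i) = \<alpha> (std S' i)"
  shows "rl (std S) S (rl \<pi> S' y0) = rl \<alpha> (nset (card S')) (rl (std S') S' y0)"
proof -
  have fS: "finite S" using assms by simp
  have "rl (std S) S (rl \<pi> S' y0) = rl (std S \<circ> \<pi>) S' y0"
    using rl_comp[of S' \<pi> "std S" y0] assms std_inj[OF fS] by simp
  also have "\<dots> = rl (\<alpha> \<circ> std S') S' y0" by (rule rl_cong) (use assms in auto)
  also have "\<dots> = rl \<alpha> (std S' ` S') (rl (std S') S' y0)"
    using rl_comp[of S' "std S'" \<alpha> y0] assms std_inj std_image by (simp add: bij_betw_def)
  finally show ?thesis using std_image assms by simp
qed

lemma fmap_perm: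
  assumes "\<pi> permutes nset n" "S' \<subseteq> nset n" "\<pi> ` S' = S" "x \<in> H (nset n)"
    and "bij_betw \<alpha> (nset (card S')) (nset (card S'))" "bij_betw \<beta> (nset (n - card S')) (nset (n - card S'))"
    and "\<forall>i\<in>S'. std S (\<pi> i) = \<alpha> (std S' i)" "\<forall>i\<in>nset n - S'. std (nset n - S) (\<pi> i) = \<beta> (std (nset n - S') i)"
  shows "fmap n S (rl \<pi> (nset n) x) = (rl \<alpha> (nset (card S')) (fst (fmap n S' x)), rl \<beta> (nset (n - card S')) (snd (fmap n S' x)))"
proof -
  let ?N = "nset n" let ?T' = "?N - S'" let ?T = "?N - S"
  have fS': "finite S'" using assms(2) by (rule finite_subset) simp
  have fT': "finite ?T'" by simp
  have u: "S' \<union> ?T' = ?N" using assms by auto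
  have x: "x \<in> H (S' \<union> ?T')" using u assms by simp
  have cT: "card ?T' = n - card S'" using assms fS' by (simp add: card_Diff_subset)
  have injN: "inj_on \<pi> ?N" and imN: "\<pi> ` ?N = ?N"
    using assms(1) permutes_inj_on permutes_image by blast+
  have inj: "inj_on \<pi> (S' \<union> ?T')" using u injN by simp
  have "\<pi> ` (?N - S') = \<pi> ` ?N - \<pi> ` S'" by (rule inj_on_image_set_diff[OF injN _ assms(2)]) auto
  then have Tpi: "\<pi> ` ?T' = ?T" using imN assms(3) by simp
  have dn: "D (\<pi> ` S') (\<pi> ` ?T') (rl \<pi> (S' \<union> ?T') x) = (rl \<pi> S' (fst (D S' ?T' x)), rl \<pi> ?T' (snd (D S' ?T' x)))"
    by (rule D_nat[OF fS' fT' _ x inj]) auto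
  have y0: "fst (D S' ?T' x) \<in> H S'" and z0: "snd (D S' ?T' x) \<in> H ?T'"
    using D_in[OF fS' fT' _ x] by auto
  have e1: "rl (std S) S (rl \<pi> S' (fst (D S' ?T' x))) = rl \<alpha> (nset (card S')) (rl (std S') S' (fst (D S' ?T' x)))"
    by (rule rl_factor2[OF fS' y0]) (use inj assms in \<open>auto intro: inj_on_subset\<close>)
  have e2: "rl (std ?T) ?T (rl \<pi> ?T' (snd (D S' ?T' x))) = rl \<beta> (nset (card ?T')) (rl (std ?T') ?T' (snd (D S' ?T' x)))"
    by (rule rl_factor2[OF fT' z0]) (use inj assms Tpi cT in \<open>auto intro: inj_on_subset\<close>)
  have "D S ?T (rl \<pi> ?N x) = (rl \<pi> S' (fst (D S' ?T' x)), rl \<pi> ?T' (snd (D S' ?T' x)))"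
    using dn Tpi assms(3) u by simp
  then show ?thesis unfolding fmap_def using e1 e2 cT by simp
qed

lemma inv_rl:
  assumes "\<pi> permutes nset n" "y \<in> H (nset n)"
  shows "rl (inv \<pi>) (nset n) (rl \<pi> (nset n) y) = y" and "rl \<pi> (nset n) (rl (inv \<pi>) (nset n) y) = y"
proof -
  have ip: "inv \<pi> permutes nset n" using assms permutes_inv by blast
  have i1: "inj_on \<pi> (nset n)" "\<pi> ` nset n = nset n" using assms permutes_inj_on permutes_image by blast+
  have i2: "inj_on (inv \<pi>) (nset n)" "inv \<pi> ` nset n = nset n" using ip permutes_inj_on permutes_image by blast+
  have "rl (inv \<pi>) (nset n) (rl \<pi> (nset n) y) = rl (inv \<pi> \<circ> \<pi>) (nset n) y"
    using rl_comp[of "nset n" \<pi> "inv \<pi>" y] i1 i2 assms by simp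
  also have "inv \<pi> \<circ> \<pi> = id" using assms permutes_inv_o by blast
  finally show "rl (inv \<pi>) (nset n) (rl \<pi> (nset n) y) = y" using rl_id[OF finite_nset assms(2)] by (rule HOL.trans)
  have "rl \<pi> (nset n) (rl (inv \<pi>) (nset n) y) = rl (\<pi> \<circ> inv \<pi>) (nset n) y"
    using rl_comp[of "nset n" "inv \<pi>" \<pi> y] i1 i2 assms by simp
  also have "\<pi> \<circ> inv \<pi> = id" using assms permutes_inv_o by blast
  finally show "rl \<pi> (nset n) (rl (inv \<pi>) (nset n) y) = y" using rl_id[OF finite_nset assms(2)] by (rule HOL.trans)
qed

lemma rl_perm_in: "\<pi> permutes nset n \<Longrightarrow> y \<in> H (nset n) \<Longrightarrow> rl \<pi> (nset n) y \<in> H (nset n)"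
  by (rule rl_in'[OF finite_nset permutes_imp_bij])

lemma fmap_transport:
  assumes "S \<in> Sub n a" "S' \<in> Sub n a"
  shows "\<exists>\<pi>. \<pi> permutes nset n \<and> (\<forall>x\<in>H (nset n). fmap n S (rl \<pi> (nset n) x) = fmap n S' x)"
proof -
  let ?N = "nset n" let ?T' = "?N - S'" let ?T = "?N - S"
  have S: "S \<subseteq> ?N" "card S = a" and S': "S' \<subseteq> ?N" "card S' = a" using assms by (auto simp: Sub_def)
  have fS: "finite S" "finite S'" using S(1) S'(1) by (auto intro: finite_subset)
  have cT: "card ?T = n - a" "card ?T' = n - a" using S S' fS by (simp_all add: card_Diff_subset)
  define \<phi>1 where "\<phi>1 = the_inv_into S (std S) \<circ> std S'"
  define \<phi>2 where "\<phi>2 = the_inv_into ?T (std ?T) \<circ> std ?T'"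
  have b1: "bij_betw \<phi>1 S' S" unfolding \<phi>1_def
    using std_bij[OF fS(2)] bij_betw_the_inv_into[OF std_bij[OF fS(1)]] S S' by (auto intro: bij_betw_trans)
  have b2: "bij_betw \<phi>2 ?T' ?T" unfolding \<phi>2_def
    using std_bij[of ?T'] bij_betw_the_inv_into[OF std_bij[of ?T]] cT by (auto intro: bij_betw_trans)
  define \<pi> where "\<pi> = (\<lambda>i. if i \<in> S' then \<phi>1 i else if i \<in> ?T' then \<phi>2 i else i)"
  have pp: "\<pi> permutes ?N" unfolding \<pi>_def by (rule glue_permutes[OF _ _ _ _ b1 b2]) (use S S' in auto)
  have img: "\<pi> ` S' = S" unfolding \<pi>_def using b1 by (auto simp: bij_betw_def)
  have c1: "\<forall>i\<in>S'. std S (\<pi> i) = id (std S' i)"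
  proof
    fix i assume i: "i \<in> S'"
    have "std S' i \<in> std S ` S" using std_image fS std_range i S S' by metis
    then show "std S (\<pi> i) = id (std S' i)" using i unfolding \<pi>_def \<phi>1_def
      by (simp add: f_the_inv_into_f std_inj[OF fS(1)])
  qed
  have c2: "\<forall>i\<in>?T'. std ?T (\<pi> i) = id (std ?T' i)"
  proof
    fix i assume i: "i \<in> ?T'"
    have "std ?T' i \<in> std ?T ` ?T" using std_image std_range i cT by (metis finite_Diff finite_nset)
    then show "std ?T (\<pi> i) = id (std ?T' i)" using i unfolding \<pi>_def \<phi>2_def
      by (simp add: f_the_inv_into_f std_inj)
  qed
  have "\<forall>x\<in>H ?N. fmap n S (rl \<pi> ?N x) = fmap n S' x"
  proof
    fix x assume x: "x \<in> H ?N"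
    have "fmap n S (rl \<pi> ?N x) = (rl id (nset (card S')) (fst (fmap n S' x)), rl id (nset (n - card S')) (snd (fmap n S' x)))"
      by (rule fmap_perm[OF pp S'(1) img x]) (use c1 c2 in auto)
    moreover have "fmap n S' x \<in> H (nset (card S')) \<times> H (nset (n - card S'))" using fmap_in S'(1) x by blast
    ultimately show "fmap n S (rl \<pi> ?N x) = fmap n S' x"
      using rl_id by (metis finite_nset mem_Times_iff prod.collapse)
  qed
  then show ?thesis using pp by blast
qed

end


context spd begin

lemma rl_bij_supp:
  assumes "\<pi> permutes nset n" "supp p \<subseteq> H (nset n)"
    and inv: "\<forall>x\<in>H (nset n). p (rl \<pi> (nset n) x) = p x"
  shows "bij_betw (rl \<pi> (nset n)) (supp p) (supp p)"
proof (rule bij_betw_imageI)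
  show "inj_on (rl \<pi> (nset n)) (supp p)"
    using rl_inj[OF finite_nset permutes_imp_bij[OF assms(1)]] assms(2) by (rule inj_on_subset)
  show "rl \<pi> (nset n) ` supp p = supp p"
  proof
    show "rl \<pi> (nset n) ` supp p \<subseteq> supp p" using inv assms(2) by (auto simp: supp_def)
    show "supp p \<subseteq> rl \<pi> (nset n) ` supp p"
    proof
      fix y assume y: "y \<in> supp p"
      then have yH: "y \<in> H (nset n)" using assms by auto
      have x: "rl (inv \<pi>) (nset n) y \<in> H (nset n)"
        using rl_perm_in[OF permutes_inv[OF assms(1)] yH] .
      have e: "rl \<pi> (nset n) (rl (inv \<pi>) (nset n) y) = y" using inv_rl(2)[OF assms(1) yH] .
      then have "p (rl (inv \<pi>) (nset n) y) = p y" using inv x by metis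
      then have "rl (inv \<pi>) (nset n) y \<in> supp p" using y by (simp add: supp_def)
      then show "y \<in> rl \<pi> (nset n) ` supp p" using e by (metis image_eqI)
    qed
  qed
qed

lemma pair_transport:
  fixes p :: "'a \<Rightarrow> 'k::field"
  assumes "finite (supp p)" "supp p \<subseteq> H (nset n)"
    and inv: "\<forall>\<pi>. \<pi> permutes nset n \<longrightarrow> (\<forall>x\<in>H (nset n). p (rl \<pi> (nset n) x) = p x)"
    and "S \<in> Sub n a" "S' \<in> Sub n a"
  shows "pair \<chi> (push (fmap n S') p) = pair \<chi> (push (fmap n S) p)"
proof -
  obtain \<pi> where pp: "\<pi> permutes nset n" and tr: "\<forall>x\<in>H (nset n). fmap n S (rl \<pi> (nset n) x) = fmap n S' x"
    using fmap_transport[OF assms(4,5)] by blast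
  have bij: "bij_betw (rl \<pi> (nset n)) (supp p) (supp p)"
    using rl_bij_supp[OF pp assms(2)] inv pp by blast
  have "pair \<chi> (push (fmap n S') p) = pair (\<chi> \<circ> fmap n S') p" by (rule pair_push[OF assms(1)])
  also have "\<dots> = (\<Sum>x\<in>supp p. \<chi> (fmap n S' x) * p x)" by (simp add: pair_def)
  also have "\<dots> = (\<Sum>x\<in>supp p. \<chi> (fmap n S (rl \<pi> (nset n) x)) * p (rl \<pi> (nset n) x))"
    by (rule sum.cong) (use tr inv pp assms(2) in auto)
  also have "\<dots> = (\<Sum>x\<in>supp p. \<chi> (fmap n S x) * p x)"
    using sum.reindex_bij_betw[OF bij, of "\<lambda>x. \<chi> (fmap n S x) * p x"] by simp
  also have "\<dots> = pair (\<chi> \<circ> fmap n S) p" by (simp add: pair_def)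
  also have "\<dots> = pair \<chi> (push (fmap n S) p)" by (rule pair_push[OF assms(1), symmetric])
  finally show ?thesis .
qed

lemma tensor_pair_zero:
  fixes w :: "'a \<times> 'a \<Rightarrow> 'k::field"
  assumes "w \<in> tensor_ker H rl a b"
    and i1: "\<And>y z \<sigma>. y \<in> H (nset a) \<Longrightarrow> z \<in> H (nset b) \<Longrightarrow> bij_betw \<sigma> (nset a) (nset a) \<Longrightarrow>
       \<chi> (rl \<sigma> (nset a) y, z) = \<chi> (y, z)"
    and i2: "\<And>y z \<tau>. y \<in> H (nset a) \<Longrightarrow> z \<in> H (nset b) \<Longrightarrow> bij_betw \<tau> (nset b) (nset b) \<Longrightarrow>
       \<chi> (y, rl \<tau> (nset b) z) = \<chi> (y, z)"
  shows "pair \<chi> w = 0"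
  using assms(1) unfolding tensor_ker_def
proof (rule lspan_pair)
  fix g :: "'a \<times> 'a \<Rightarrow> 'k"
  assume g: "g \<in> {delta (y, z) - delta (rl \<sigma> (nset a) y, z) | y z \<sigma>.
         y \<in> H (nset a) \<and> z \<in> H (nset b) \<and> bij_betw \<sigma> (nset a) (nset a)} \<union>
      {delta (y, z) - delta (y, rl \<tau> (nset b) z) | y z \<tau>.
         y \<in> H (nset a) \<and> z \<in> H (nset b) \<and> bij_betw \<tau> (nset b) (nset b)}"
  then obtain y0 y1 where gd: "g = delta y0 - delta y1" by blast
  show "finite (supp g)" unfolding gd using supp_diff[of "delta y0" "delta y1"] fin_delta
    by (metis finite_Un finite_subset)
  from g show "pair \<chi> g = 0"
  proof
    assume "g \<in> {delta (y, z) - delta (rl \<sigma> (nset a) y, z) | y z \<sigma>.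
         y \<in> H (nset a) \<and> z \<in> H (nset b) \<and> bij_betw \<sigma> (nset a) (nset a)}"
    then obtain y z \<sigma> where e: "g = delta (y, z) - delta (rl \<sigma> (nset a) y, z)" and
      h: "y \<in> H (nset a)" "z \<in> H (nset b)" "bij_betw \<sigma> (nset a) (nset a)" by blast
    have "pair \<chi> g = \<chi> (y, z) - \<chi> (rl \<sigma> (nset a) y, z)" unfolding e by (simp add: pair_diff fin_delta pair_delta)
    then show ?thesis using i1[OF h] by simp
  next
    assume "g \<in> {delta (y, z) - delta (y, rl \<tau> (nset b) z) | y z \<tau>.
         y \<in> H (nset a) \<and> z \<in> H (nset b) \<and> bij_betw \<tau> (nset b) (nset b)}"
    then obtain y z \<tau> where e: "g = delta (y, z) - delta (y, rl \<tau> (nset b) z)" and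
      h: "y \<in> H (nset a)" "z \<in> H (nset b)" "bij_betw \<tau> (nset b) (nset b)" by blast
    have "pair \<chi> g = \<chi> (y, z) - \<chi> (y, rl \<tau> (nset b) z)" unfolding e by (simp add: pair_diff fin_delta pair_delta)
    then show ?thesis using i2[OF h] by simp
  qed
qed

end


context spd begin

lemma u_invariant:
  fixes p :: "'a \<Rightarrow> 'k::field"
  assumes fin: "finite (supp p)" and sH: "supp p \<subseteq> H (nset n)"
    and inv: "\<forall>\<pi>. \<pi> permutes nset n \<longrightarrow> (\<forall>x\<in>H (nset n). p (rl \<pi> (nset n) x) = p x)"
    and Sn: "S \<subseteq> nset n"
    and ba: "bij_betw \<alpha> (nset (card S)) (nset (card S))"
    and bb: "bij_betw \<beta> (nset (n - card S)) (nset (n - card S))"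
    and y: "y \<in> H (nset (card S))" and z: "z \<in> H (nset (n - card S))"
  shows "push (fmap n S) p (rl \<alpha> (nset (card S)) y, rl \<beta> (nset (n - card S)) z) = push (fmap n S) p (y, z)"
proof -
  let ?N = "nset n" let ?T = "?N - S" let ?a = "card S" let ?b = "n - card S"
  have fS: "finite S" using Sn by (rule finite_subset) simp
  have fT: "finite ?T" by simp
  have cT: "card ?T = ?b" using Sn fS by (simp add: card_Diff_subset)
  define \<phi>1 where "\<phi>1 = the_inv_into S (std S) \<circ> \<alpha> \<circ> std S"
  define \<phi>2 where "\<phi>2 = the_inv_into ?T (std ?T) \<circ> \<beta> \<circ> std ?T"
  have b1: "bij_betw \<phi>1 S S" unfolding \<phi>1_def
    using std_bij[OF fS] ba bij_betw_the_inv_into[OF std_bij[OF fS]] by (auto intro: bij_betw_trans)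
  have b2: "bij_betw \<phi>2 ?T ?T" unfolding \<phi>2_def
    using std_bij[OF fT] bb bij_betw_the_inv_into[OF std_bij[OF fT]] cT by (auto intro: bij_betw_trans)
  define \<pi> where "\<pi> = (\<lambda>i. if i \<in> S then \<phi>1 i else if i \<in> ?T then \<phi>2 i else i)"
  have pp: "\<pi> permutes ?N" unfolding \<pi>_def by (rule glue_permutes[OF _ _ _ _ b1 b2]) (use Sn in auto)
  have img: "\<pi> ` S = S" unfolding \<pi>_def using b1 by (auto simp: bij_betw_def)
  have c1: "\<forall>i\<in>S. std S (\<pi> i) = \<alpha> (std S i)"
  proof
    fix i assume i: "i \<in> S"
    have "\<alpha> (std S i) \<in> std S ` S"
      using std_image[OF fS] std_range[OF fS i] ba by (auto simp: bij_betw_def)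
    then show "std S (\<pi> i) = \<alpha> (std S i)" using i unfolding \<pi>_def \<phi>1_def
      by (simp add: f_the_inv_into_f std_inj[OF fS])
  qed
  have c2: "\<forall>i\<in>?T. std ?T (\<pi> i) = \<beta> (std ?T i)"
  proof
    fix i assume i: "i \<in> ?T"
    have "\<beta> (std ?T i) \<in> std ?T ` ?T"
      using std_image[OF fT] std_range[OF fT i] bb cT by (auto simp: bij_betw_def)
    then show "std ?T (\<pi> i) = \<beta> (std ?T i)" using i unfolding \<pi>_def \<phi>2_def
      by (simp add: f_the_inv_into_f std_inj[OF fT])
  qed
  define g where "g = (\<lambda>w. (rl \<alpha> (nset ?a) (fst w), rl \<beta> (nset ?b) (snd w)))"
  have fe: "\<And>x. x \<in> H ?N \<Longrightarrow> fmap n S (rl \<pi> ?N x) = g (fmap n S x)"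
    unfolding g_def by (rule fmap_perm[OF pp Sn img _ ba bb]) (use c1 c2 img in auto)
  have inj: "inj_on g (H (nset ?a) \<times> H (nset ?b))"
  proof (rule inj_onI)
    fix w w' assume w: "w \<in> H (nset ?a) \<times> H (nset ?b)" "w' \<in> H (nset ?a) \<times> H (nset ?b)" "g w = g w'"
    have "fst w = fst w'" using w inj_onD[OF rl_inj[OF finite_nset ba]] by (auto simp: g_def)
    moreover have "snd w = snd w'" using w inj_onD[OF rl_inj[OF finite_nset bb]] by (auto simp: g_def)
    ultimately show "w = w'" by (simp add: prod_eq_iff)
  qed
  have fim: "fmap n S ` H ?N \<subseteq> H (nset ?a) \<times> H (nset ?b)" using fmap_in[OF Sn] by blast
  have "push (fmap n S) p (g (y, z)) = push (fmap n S) p (y, z)"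
    by (rule push_equivariant[OF fin sH rl_bij[OF finite_nset permutes_imp_bij[OF pp]] _ fe inj fim])
       (use inv pp y z in auto)
  then show ?thesis by (simp add: g_def)
qed

lemma inv_fock_prim_imp_prim:
  fixes p :: "'a \<Rightarrow> 'k::field_char_0"
  assumes fin: "finite (supp p)" and sH: "supp p \<subseteq> H (nset n)"
    and inv: "\<forall>\<pi>. \<pi> permutes nset n \<longrightarrow> (\<forall>x\<in>H (nset n). p (rl \<pi> (nset n) x) = p x)"
    and fp: "fock_primitive H rl D n p"
  shows "lin_primitive D (nset n) p"
  unfolding lin_primitive_def
proof (intro allI impI)
  let ?N = "nset n"
  fix S T assume ST: "S \<union> T = ?N \<and> S \<inter> T = {} \<and> S \<noteq> {} \<and> T \<noteq> {}"
  then have Sn: "S \<subseteq> ?N" and Te: "T = ?N - S" and Sne: "S \<noteq> {}" and Tne: "T \<noteq> {}" by auto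
  let ?a = "card S" let ?b = "n - card S"
  have fS: "finite S" using Sn by (rule finite_subset) simp
  have fT: "finite T" using Te by simp
  have cT: "card T = ?b" using Sn fS Te by (simp add: card_Diff_subset)
  have a0: "0 < ?a" using fS Sne by (simp add: card_gt_0_iff)
  have an: "?a < n" using cT fT Tne card_gt_0_iff Sn card_mono[OF finite_nset Sn] by fastforce
  have SSub: "S \<in> Sub n ?a" using Sn by (simp add: Sub_def)
  define u where "u = push (fmap n S) p"
  let ?B = "H (nset ?a) \<times> H (nset ?b)"
  have su: "supp u \<subseteq> ?B"
    using supp_push[of "fmap n S" p] fmap_in[OF Sn] sH unfolding u_def by blast
  have fu: "finite (supp u)" unfolding u_def using fin by (rule finite_supp_push)
  have tk: "fock_comp rl D n ?a p \<in> tensor_ker H rl ?a ?b"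
    using fp a0 an unfolding fock_primitive_def by blast
  have pc: "pair \<chi> (fock_comp rl D n ?a p) = of_nat (card (Sub n ?a)) * pair \<chi> u" for \<chi> :: "'a \<times> 'a \<Rightarrow> 'k"
  proof -
    have "pair \<chi> (fock_comp rl D n ?a p) = (\<Sum>S'\<in>Sub n ?a. pair \<chi> (push (fmap n S') p))"
      unfolding fock_comp_eq by (rule pair_sum[OF finite_Sub finite_supp_push[OF fin]])
    also have "\<dots> = (\<Sum>S'\<in>Sub n ?a. pair \<chi> u)"
      unfolding u_def by (rule sum.cong[OF HOL.refl], rule pair_transport[OF fin sH inv SSub])
    finally show ?thesis by simp
  qed
  have cs: "card (Sub n ?a) = n choose ?a" unfolding Sub_def using n_subsets[of "nset n" ?a] by simp
  have cs0: "(of_nat (card (Sub n ?a)) :: 'k) \<noteq> 0" unfolding cs using an by simp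
  have u0: "u = 0"
  proof (rule ccontr)
    assume "u \<noteq> 0"
    then obtain w0 where w0: "u w0 \<noteq> 0" by (auto simp: fun_eq_iff)
    define c where "c = u w0"
    define L where "L = {w\<in>?B. u w = c}"
    define \<chi> :: "'a \<times> 'a \<Rightarrow> 'k" where "\<chi> = (\<lambda>w. if w \<in> L then 1 else 0)"
    have "pair \<chi> (fock_comp rl D n ?a p) = 0"
    proof (rule tensor_pair_zero[OF tk])
      fix y z \<sigma> assume h: "y \<in> H (nset ?a)" "z \<in> H (nset ?b)" "bij_betw \<sigma> (nset ?a) (nset ?a)"
      have "u (rl \<sigma> (nset ?a) y, rl id (nset ?b) z) = u (y, z)" unfolding u_def
        by (rule u_invariant[OF fin sH inv Sn h(3) _ h(1,2)]) (simp add: bij_betw_id)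
      then have "u (rl \<sigma> (nset ?a) y, z) = u (y, z)" using rl_id[OF finite_nset h(2)] by simp
      moreover have "rl \<sigma> (nset ?a) y \<in> H (nset ?a)" using rl_in'[OF finite_nset h(3) h(1)] .
      ultimately show "\<chi> (rl \<sigma> (nset ?a) y, z) = \<chi> (y, z)" using h by (simp add: \<chi>_def L_def)
    next
      fix y z \<tau> assume h: "y \<in> H (nset ?a)" "z \<in> H (nset ?b)" "bij_betw \<tau> (nset ?b) (nset ?b)"
      have "u (rl id (nset ?a) y, rl \<tau> (nset ?b) z) = u (y, z)" unfolding u_def
        by (rule u_invariant[OF fin sH inv Sn _ h(3) h(1,2)]) (simp add: bij_betw_id)
      then have "u (y, rl \<tau> (nset ?b) z) = u (y, z)" using rl_id[OF finite_nset h(1)] by simp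
      moreover have "rl \<tau> (nset ?b) z \<in> H (nset ?b)" using rl_in'[OF finite_nset h(3) h(2)] .
      ultimately show "\<chi> (y, rl \<tau> (nset ?b) z) = \<chi> (y, z)" using h by (simp add: \<chi>_def L_def)
    qed
    then have pu: "pair \<chi> u = 0" using pc cs0 by simp
    have "pair \<chi> u = (\<Sum>w\<in>supp u. (if w \<in> L then 1 else 0) * u w)" by (simp add: pair_def \<chi>_def)
    also have "\<dots> = (\<Sum>w\<in>supp u \<inter> L. u w)"
      unfolding sum.inter_restrict[OF fu] by (rule sum.cong) auto
    also have "\<dots> = (\<Sum>w\<in>supp u \<inter> L. c)" by (rule sum.cong) (auto simp: L_def)
    also have "\<dots> = of_nat (card (supp u \<inter> L)) * c" by simp
    finally have e: "pair \<chi> u = of_nat (card (supp u \<inter> L)) * c" .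
    have "w0 \<in> supp u \<inter> L" using w0 su by (auto simp: supp_def L_def c_def)
    then have "card (supp u \<inter> L) \<noteq> 0" using fu by auto
    then have "pair \<chi> u \<noteq> 0" using e w0 c_def by simp
    then show False using pu by simp
  qed
  define g where "g = (\<lambda>w. (rl (std S) S (fst w), rl (std T) T (snd w)))"
  have fg: "fmap n S = g \<circ> D S T" unfolding fmap_def g_def Te by (simp add: fun_eq_iff)
  define q where "q = push (D S T) p"
  have uq: "u = push g q" unfolding u_def q_def fg by (rule push_comp[OF fin, symmetric])
  have xH: "\<And>x. x \<in> H ?N \<Longrightarrow> x \<in> H (S \<union> T)" using ST by simp
  have sq: "supp q \<subseteq> H S \<times> H T"
  proof
    fix w assume "w \<in> supp q"
    then obtain x where x: "x \<in> supp p" "w = D S T x" using supp_push[of "D S T" p] unfolding q_def by blast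
    then have "x \<in> H (S \<union> T)" using sH xH by auto
    then show "w \<in> H S \<times> H T" using D_in[OF fS fT _ ] ST x by (simp add: mem_Times_iff)
  qed
  have fq: "finite (supp q)" unfolding q_def using fin by (rule finite_supp_push)
  have injg: "inj_on g (H S \<times> H T)"
  proof (rule inj_onI)
    fix w w' assume w: "w \<in> H S \<times> H T" "w' \<in> H S \<times> H T" "g w = g w'"
    have "fst w = fst w'" using w inj_onD[OF rl_inj[OF fS std_bij[OF fS]]] by (auto simp: g_def)
    moreover have "snd w = snd w'" using w inj_onD[OF rl_inj[OF fT std_bij[OF fT]]] by (auto simp: g_def)
    ultimately show "w = w'" by (simp add: prod_eq_iff)
  qed
  show "push (D S T) p = 0"
  proof
    fix w
    show "push (D S T) p w = 0 w"
    proof (cases "w \<in> H S \<times> H T")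
      case True
      have "q w = push g q (g w)" using push_at_image[OF injg sq fq True] by simp
      also have "\<dots> = 0" using u0 uq by (metis zero_fun_apply)
      finally show ?thesis by (simp add: q_def)
    next
      case False
      then have "w \<notin> supp q" using sq by blast
      then show ?thesis by (simp add: q_def supp_def)
    qed
  qed
qed

end


lemma delta_expand:
  assumes "finite (supp (w :: _ \<Rightarrow> 'k::field))"
  shows "w = (\<Sum>x\<in>supp w. (\<lambda>z. w x * delta x z))"
proof
  fix z
  have "(\<Sum>x\<in>supp w. (\<lambda>z. w x * delta x z)) z = (\<Sum>x\<in>supp w. if x = z then w x else 0)"
    by (simp add: sum_fun_apply delta_def) (rule sum.cong, auto)
  also have "\<dots> = w z" using assms by (simp add: sum.delta' supp_def)
  finally show "w z = (\<Sum>x\<in>supp w. (\<lambda>z. w x * delta x z)) z" by simp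
qed

context spd begin

lemma coinv_push:
  fixes w :: "'a \<Rightarrow> 'k::field"
  assumes "lin (H (nset n)) w" "\<tau> permutes nset n"
  shows "w - push (rl \<tau> (nset n)) w \<in> coinv_ker H rl n"
proof -
  let ?N = "nset n"
  have fw: "finite (supp w)" and sw: "supp w \<subseteq> H ?N" using assms by (auto simp: lin_def)
  have e: "w - push (rl \<tau> ?N) w = (\<Sum>x\<in>supp w. (\<lambda>z. w x * (delta x - delta (rl \<tau> ?N x)) z))"
  proof
    fix z
    have "(\<Sum>x\<in>supp w. (\<lambda>z. w x * (delta x - delta (rl \<tau> ?N x)) z)) z
        = (\<Sum>x\<in>supp w. w x * delta x z) - (\<Sum>x\<in>supp w. w x * delta (rl \<tau> ?N x) z)"
      unfolding sum_fun_apply sum_subtractf[symmetric] by (rule sum.cong) (simp_all add: right_diff_distrib)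
    also have "(\<Sum>x\<in>supp w. w x * delta x z) = w z"
      using fun_cong[OF delta_expand[OF fw], of z] unfolding sum_fun_apply by (rule sym)
    also have "(\<Sum>x\<in>supp w. w x * delta (rl \<tau> ?N x) z) = push (rl \<tau> ?N) w z"
      unfolding push_def sum.inter_filter[OF fw] by (rule sum.cong) (auto simp: delta_def)
    finally show "(w - push (rl \<tau> ?N) w) z = (\<Sum>x\<in>supp w. (\<lambda>z. w x * (delta x - delta (rl \<tau> ?N x)) z)) z"
      by simp
  qed
  show ?thesis unfolding e coinv_ker_def
  proof (rule lspan_sum[OF fw])
    fix x assume "x \<in> supp w"
    then have "x \<in> H ?N" using sw by auto
    then have "delta x - delta (rl \<tau> ?N x) \<in> {delta x - delta (rl \<sigma> (nset n) x) | x \<sigma>. x \<in> H (nset n) \<and> bij_betw \<sigma> (nset n) (nset n)}"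
      using permutes_imp_bij[OF assms(2)] by blast
    then show "(\<lambda>z. w x * (delta x - delta (rl \<tau> ?N x)) z) \<in> lspan {delta x - delta (rl \<sigma> (nset n) x) | x \<sigma>. x \<in> H (nset n) \<and> bij_betw \<sigma> (nset n) (nset n)}"
      by (intro lspan.smult lspan.gen)
  qed
qed

lemma push_inv_eval:
  fixes v :: "'a \<Rightarrow> 'k::field"
  assumes "\<sigma> permutes nset n" "lin (H (nset n)) v" "y \<in> H (nset n)"
  shows "push (rl (inv \<sigma>) (nset n)) v y = v (rl \<sigma> (nset n) y)"
proof -
  have ip: "inv \<sigma> permutes nset n" using assms permutes_inv by blast
  have inj: "inj_on (rl (inv \<sigma>) (nset n)) (H (nset n))"
    using rl_inj[OF finite_nset permutes_imp_bij[OF ip]] .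
  have "push (rl (inv \<sigma>) (nset n)) v (rl (inv \<sigma>) (nset n) (rl \<sigma> (nset n) y)) = v (rl \<sigma> (nset n) y)"
    by (rule push_at_image[OF inj]) (use assms rl_perm_in in \<open>auto simp: lin_def\<close>)
  then show ?thesis using inv_rl(1)[OF assms(1,3)] by simp
qed

lemma supp_push_inv:
  fixes v :: "'a \<Rightarrow> 'k::field"
  assumes "\<sigma> permutes nset n" "lin (H (nset n)) v"
  shows "supp (push (rl (inv \<sigma>) (nset n)) v) \<subseteq> H (nset n)"
proof -
  have ip: "inv \<sigma> permutes nset n" using assms permutes_inv by blast
  show ?thesis using supp_push[of "rl (inv \<sigma>) (nset n)" v] rl_perm_in[OF ip] assms(2)
    by (auto simp: lin_def)
qed

lemma symmetrize:
  fixes v :: "'a \<Rightarrow> 'k::field_char_0"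
  assumes lv: "lin (H (nset n)) v"
  shows "\<exists>p. finite (supp p) \<and> supp p \<subseteq> H (nset n) \<and>
    (\<forall>\<pi>. \<pi> permutes nset n \<longrightarrow> (\<forall>x\<in>H (nset n). p (rl \<pi> (nset n) x) = p x)) \<and>
    v - p \<in> coinv_ker H rl n"
proof -
  let ?N = "nset n"
  let ?G = "{\<sigma>. \<sigma> permutes ?N}"
  have fG: "finite ?G" using finite_permutations[OF finite_nset] .
  have cG: "card ?G = fact n" using card_permutations[of ?N n] by simp
  define c :: 'k where "c = inverse (of_nat (fact n))"
  have c1: "c * of_nat (card ?G) = 1" unfolding c_def cG by simp
  have fv: "finite (supp v)" using lv by (simp add: lin_def)
  define P where "P = (\<lambda>\<sigma>. push (rl (inv \<sigma>) ?N) v)"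
  define p where "p = (\<lambda>y. c * (\<Sum>\<sigma>\<in>?G. P \<sigma>) y)"
  have fP: "\<And>\<sigma>. finite (supp (P \<sigma>))" unfolding P_def using fv by (rule finite_supp_push)
  have sp: "supp p \<subseteq> supp (\<Sum>\<sigma>\<in>?G. P \<sigma>)" unfolding p_def by (rule supp_smult)
  have fsum: "finite (supp (\<Sum>\<sigma>\<in>?G. P \<sigma>))" by (rule finite_supp_sum[OF fG]) (rule fP)
  have f1: "finite (supp p)" by (rule finite_subset[OF sp fsum])
  have s1: "supp p \<subseteq> H ?N"
  proof -
    have "supp (\<Sum>\<sigma>\<in>?G. P \<sigma>) \<subseteq> (\<Union>\<sigma>\<in>?G. supp (P \<sigma>))" by (rule supp_sum_sub)
    also have "\<dots> \<subseteq> H ?N" unfolding P_def using supp_push_inv[OF _ lv] by blast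
    finally show ?thesis using sp by blast
  qed
  have pe: "\<And>y. y \<in> H ?N \<Longrightarrow> p y = c * (\<Sum>\<sigma>\<in>?G. v (rl \<sigma> ?N y))"
    unfolding p_def P_def by (simp add: sum_fun_apply push_inv_eval[OF _ lv])
  have inv: "\<forall>\<pi>. \<pi> permutes ?N \<longrightarrow> (\<forall>x\<in>H ?N. p (rl \<pi> ?N x) = p x)"
  proof (intro allI impI ballI)
    fix \<pi> x assume pp: "\<pi> permutes ?N" and x: "x \<in> H ?N"
    have "p (rl \<pi> ?N x) = c * (\<Sum>\<sigma>\<in>?G. v (rl \<sigma> ?N (rl \<pi> ?N x)))" using pe rl_perm_in[OF pp x] by simp
    also have "\<dots> = c * (\<Sum>\<sigma>\<in>?G. v (rl (\<sigma> \<circ> \<pi>) ?N x))"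
    proof -
      have "rl \<sigma> ?N (rl \<pi> ?N x) = rl (\<sigma> \<circ> \<pi>) ?N x" if s: "\<sigma> \<in> ?G" for \<sigma>
      proof -
        have im: "\<pi> ` ?N = ?N" by (rule permutes_image[OF pp])
        have i1: "inj_on \<pi> ?N" by (rule permutes_inj_on[OF pp])
        have i2: "inj_on \<sigma> (\<pi> ` ?N)" using permutes_inj_on s im by auto
        show ?thesis using rl_comp[OF finite_nset i1 i2 x] im by simp
      qed
      then show ?thesis by simp
    qed
    also have "\<dots> = c * (\<Sum>\<sigma>\<in>?G. v (rl \<sigma> ?N x))"
      using sum_permutations_compose_right[OF pp, of "\<lambda>\<sigma>. v (rl \<sigma> ?N x)"] by simp
    also have "\<dots> = p x" using pe x by simp
    finally show "p (rl \<pi> ?N x) = p x" .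
  qed
  have e: "v - p = (\<lambda>z. c * (\<Sum>\<sigma>\<in>?G. v - P \<sigma>) z)"
  proof
    fix z
    have "(\<lambda>z. c * (\<Sum>\<sigma>\<in>?G. v - P \<sigma>) z) z = c * (of_nat (card ?G) * v z) - c * (\<Sum>\<sigma>\<in>?G. P \<sigma> z)"
      by (simp add: sum_fun_apply sum_subtractf algebra_simps)
    also have "\<dots> = v z - p z" using c1 by (simp add: p_def sum_fun_apply mult.assoc[symmetric])
    finally show "(v - p) z = (\<lambda>z. c * (\<Sum>\<sigma>\<in>?G. v - P \<sigma>) z) z" by simp
  qed
  have "v - p \<in> coinv_ker H rl n"
    unfolding e coinv_ker_def
    by (intro lspan.smult lspan_sum[OF fG], unfold coinv_ker_def[symmetric] P_def)
       (use coinv_push[OF lv] permutes_inv in blast)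
  then show ?thesis using f1 s1 inv by blast
qed

lemma prim_fock_zero:
  fixes p :: "'a \<Rightarrow> 'k::field"
  assumes "lin (H (nset n)) p" "lin_primitive D (nset n) p" "0 < a" "a < n"
  shows "fock_comp rl D n a p = 0"
proof -
  have "\<And>S. S \<in> Sub n a \<Longrightarrow> push (fmap n S) p = 0"
  proof -
    fix S assume S: "S \<in> Sub n a"
    then have Sn: "S \<subseteq> nset n" and ca: "card S = a" by (auto simp: Sub_def)
    have fS: "finite S" using Sn by (rule finite_subset) simp
    have Sne: "S \<noteq> {}" using ca assms by auto
    have cT: "card (nset n - S) = n - a" using Sn fS ca by (simp add: card_Diff_subset)
    have Tne: "nset n - S \<noteq> {}"
    proof
      assume "nset n - S = {}"
      with cT have "n - a = 0" by simp
      with assms(4) show False by simp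
    qed
    define g where "g = (\<lambda>w. (rl (std S) S (fst w), rl (std (nset n - S)) (nset n - S) (snd w)))"
    have fg: "fmap n S = g \<circ> D S (nset n - S)" unfolding fmap_def g_def by (simp add: fun_eq_iff)
    have "push (D S (nset n - S)) p = 0"
    proof -
      have "S \<union> (nset n - S) = nset n \<and> S \<inter> (nset n - S) = {} \<and> S \<noteq> {} \<and> nset n - S \<noteq> {}"
        using Sn Sne Tne by auto
      then show ?thesis using assms(2) unfolding lin_primitive_def by blast
    qed
    then show "push (fmap n S) p = 0" unfolding fg using push_comp[of p g "D S (nset n - S)"] assms(1)
      by (simp add: lin_def)
  qed
  then show ?thesis unfolding fock_comp_eq by simp
qed

lemma part1:
  fixes v :: "'a \<Rightarrow> 'k::field_char_0"
  assumes lv: "lin (H (nset n)) v"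
  shows "fock_primitive H rl D n v \<longleftrightarrow>
    (\<exists>p. lin (H (nset n)) p \<and> lin_primitive D (nset n) p \<and> v - p \<in> coinv_ker H rl n)"
proof
  assume fp: "fock_primitive H rl D n v"
  obtain p where f1: "finite (supp p)" and s1: "supp p \<subseteq> H (nset n)"
    and inv: "\<forall>\<pi>. \<pi> permutes nset n \<longrightarrow> (\<forall>x\<in>H (nset n). p (rl \<pi> (nset n) x) = p x)"
    and k: "v - p \<in> coinv_ker H rl n" using symmetrize[OF lv] by blast
  have fv: "finite (supp v)" using lv by (simp add: lin_def)
  have "fock_primitive H rl D n p"
    unfolding fock_primitive_def
  proof (intro allI impI)
    fix a assume a: "0 < a \<and> a < n"
    have t1: "fock_comp rl D n a v \<in> tensor_ker H rl a (n - a)" using fp a by (simp add: fock_primitive_def)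
    have t2: "fock_comp rl D n a (v - p) \<in> tensor_ker H rl a (n - a)" using fock_comp_ker[OF k] .
    have "fock_comp rl D n a p = fock_comp rl D n a v - fock_comp rl D n a (v - p)"
      using fock_comp_diff[OF fv f1] by simp
    then show "fock_comp rl D n a p \<in> tensor_ker H rl a (n - a)"
      using t1 t2 unfolding tensor_ker_def by (simp add: lspan_diff)
  qed
  then have "lin_primitive D (nset n) p" using inv_fock_prim_imp_prim[OF f1 s1 inv] by blast
  then show "\<exists>p. lin (H (nset n)) p \<and> lin_primitive D (nset n) p \<and> v - p \<in> coinv_ker H rl n"
    using f1 s1 k by (auto simp: lin_def)
next
  assume "\<exists>p. lin (H (nset n)) p \<and> lin_primitive D (nset n) p \<and> v - p \<in> coinv_ker H rl n"
  then obtain p where lp: "lin (H (nset n)) p" and pp: "lin_primitive D (nset n) p"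
    and k: "v - p \<in> coinv_ker H rl n" by blast
  have fv: "finite (supp v)" using lv by (simp add: lin_def)
  have fp: "finite (supp p)" using lp by (simp add: lin_def)
  show "fock_primitive H rl D n v"
    unfolding fock_primitive_def
  proof (intro allI impI)
    fix a assume a: "0 < a \<and> a < n"
    have "fock_comp rl D n a (v - p) = fock_comp rl D n a v - fock_comp rl D n a p"
      using fock_comp_diff[OF fv fp] .
    then have "fock_comp rl D n a v = fock_comp rl D n a (v - p)"
      using prim_fock_zero[OF lp pp] a by simp
    then show "fock_comp rl D n a v \<in> tensor_ker H rl a (n - a)" using fock_comp_ker[OF k] by simp
  qed
qed

end


fun mf :: "nat \<Rightarrow> 'a set \<Rightarrow> ('a \<Rightarrow> 'a \<Rightarrow> bool) \<Rightarrow> 'a \<Rightarrow> 'a \<Rightarrow> 'k::comm_ring_1" where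
  "mf 0 A R x y = 0"
| "mf (Suc k) A R x y = (if x \<in> A \<and> y \<in> A \<and> R x y then
     (if x = y then 1 else - (\<Sum>z\<in>{z\<in>A. R x z \<and> R z y \<and> z \<noteq> y}. mf k A R x z)) else 0)"

lemma zeta_inj:
  fixes w :: "'a \<Rightarrow> 'k::field"
  assumes fw: "finite (supp w)" and sw: "supp w \<subseteq> A"
    and rf: "\<And>a. a \<in> A \<Longrightarrow> R a a"
    and an: "\<And>a b. a \<in> A \<Longrightarrow> b \<in> A \<Longrightarrow> R a b \<Longrightarrow> R b a \<Longrightarrow> a = b"
    and tr: "\<And>a b c. a \<in> A \<Longrightarrow> b \<in> A \<Longrightarrow> c \<in> A \<Longrightarrow> R a b \<Longrightarrow> R b c \<Longrightarrow> R a c"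
    and z: "\<And>a. a \<in> A \<Longrightarrow> (\<Sum>b\<in>{b\<in>supp w. R b a}. w b) = 0"
  shows "w = 0"
proof (rule ccontr)
  assume "w \<noteq> 0"
  then obtain b0 where "b0 \<in> supp w" by (auto simp: supp_def fun_eq_iff)
  then obtain m where m: "m \<in> supp w" and mmin: "\<And>b. b \<in> supp w \<Longrightarrow> card {b'\<in>supp w. R b' m} \<le> card {b'\<in>supp w. R b' b}"
    using ex_has_least_nat[of "\<lambda>b. b \<in> supp w" b0 "\<lambda>b. card {b'\<in>supp w. R b' b}"] by blast
  have mA: "m \<in> A" using m sw by auto
  have single: "{b\<in>supp w. R b m} = {m}"
  proof (rule ccontr)
    assume "{b\<in>supp w. R b m} \<noteq> {m}"
    moreover have "m \<in> {b\<in>supp w. R b m}" using m rf mA by auto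
    ultimately obtain b where b: "b \<in> supp w" "R b m" "b \<noteq> m" by blast
    have bA: "b \<in> A" using b sw by auto
    have sub: "{b'\<in>supp w. R b' b} \<subset> {b'\<in>supp w. R b' m}"
    proof
      show "{b'\<in>supp w. R b' b} \<subseteq> {b'\<in>supp w. R b' m}" using tr b bA mA sw by blast
      have "m \<notin> {b'\<in>supp w. R b' b}" using an[OF mA bA] b by auto
      then show "{b'\<in>supp w. R b' b} \<noteq> {b'\<in>supp w. R b' m}" using m rf mA by auto
    qed
    have "card {b'\<in>supp w. R b' b} < card {b'\<in>supp w. R b' m}"
      by (rule psubset_card_mono[OF _ sub]) (use fw in auto)
    then show False using mmin[OF b(1)] by simp
  qed
  have "(\<Sum>b\<in>{b\<in>supp w. R b m}. w b) = w m" using single by simp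
  then show False using z[OF mA] m by (simp add: supp_def)
qed

locale lfp =
  fixes A :: "'a set" and R :: "'a \<Rightarrow> 'a \<Rightarrow> bool"
  assumes rf: "\<And>a. a \<in> A \<Longrightarrow> R a a"
    and an: "\<And>a b. a \<in> A \<Longrightarrow> b \<in> A \<Longrightarrow> R a b \<Longrightarrow> R b a \<Longrightarrow> a = b"
    and tr: "\<And>a b c. a \<in> A \<Longrightarrow> b \<in> A \<Longrightarrow> c \<in> A \<Longrightarrow> R a b \<Longrightarrow> R b c \<Longrightarrow> R a c"
    and lf: "\<And>a b. a \<in> A \<Longrightarrow> b \<in> A \<Longrightarrow> finite {z\<in>A. R a z \<and> R z b}"
begin

definition ivl where "ivl x y = {z\<in>A. R x z \<and> R z y}"

lemma ivl_sub:
  assumes "x \<in> A" "y \<in> A" "z \<in> A" "R x z" "R z y" "z \<noteq> y"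
  shows "card (ivl x z) < card (ivl x y)"
proof (rule psubset_card_mono)
  show "finite (ivl x y)" using lf assms by (simp add: ivl_def)
  show "ivl x z \<subset> ivl x y"
  proof
    show "ivl x z \<subseteq> ivl x y" unfolding ivl_def using tr assms by blast
    have "y \<notin> ivl x z" unfolding ivl_def using an assms by blast
    moreover have "y \<in> ivl x y" unfolding ivl_def using assms tr rf by blast
    ultimately show "ivl x z \<noteq> ivl x y" by blast
  qed
qed

lemma card_ivl_pos: "x \<in> A \<Longrightarrow> y \<in> A \<Longrightarrow> R x y \<Longrightarrow> 0 < card (ivl x y)"
  using lf rf unfolding ivl_def by (subst card_gt_0_iff) blast

lemma mf_out: "\<not> (x \<in> A \<and> y \<in> A \<and> R x y) \<Longrightarrow> mf k A R x y = 0"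
  by (cases k) auto

lemma mf_stable:
  "card (ivl x y) \<le> k \<Longrightarrow> card (ivl x y) \<le> k' \<Longrightarrow> (mf k A R x y :: 'k::comm_ring_1) = mf k' A R x y"
proof (induction "card (ivl x y)" arbitrary: x y k k' rule: less_induct)
  case less
  show ?case
  proof (cases "x \<in> A \<and> y \<in> A \<and> R x y")
    case False then show ?thesis by (simp add: mf_out)
  next
    case True
    then have p: "0 < card (ivl x y)" using card_ivl_pos by blast
    obtain j where k: "k = Suc j" using less p by (cases k) auto
    obtain j' where k': "k' = Suc j'" using less p by (cases k') auto
    have "\<And>z. z \<in> {z\<in>A. R x z \<and> R z y \<and> z \<noteq> y} \<Longrightarrow> (mf j A R x z :: 'k) = mf j' A R x z"
    proof -
      fix z assume z: "z \<in> {z\<in>A. R x z \<and> R z y \<and> z \<noteq> y}"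
      have lt: "card (ivl x z) < card (ivl x y)" using ivl_sub True z by blast
      show "(mf j A R x z :: 'k) = mf j' A R x z"
        by (rule less.hyps[OF lt]) (use lt less.prems k k' in auto)
    qed
    then show ?thesis using True k k' by simp
  qed
qed

definition M :: "'a \<Rightarrow> 'a \<Rightarrow> 'k::comm_ring_1" where "M x y = mf (card (ivl x y)) A R x y"

lemma M_eq: "(M x y :: 'k::comm_ring_1) = (if x \<in> A \<and> y \<in> A \<and> R x y then
        (if x = y then 1 else - (\<Sum>z\<in>{z\<in>A. R x z \<and> R z y \<and> z \<noteq> y}. M x z)) else 0)"
proof (cases "x \<in> A \<and> y \<in> A \<and> R x y")
  case False
  then have m0: "(M x y :: 'k) = 0" unfolding M_def by (rule mf_out)
  show ?thesis by (simp only: if_not_P[OF False] m0)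
next
  case True
  then obtain j where j: "card (ivl x y) = Suc j" using card_ivl_pos by (metis Suc_pred)
  have "\<And>z. z \<in> {z\<in>A. R x z \<and> R z y \<and> z \<noteq> y} \<Longrightarrow> M x z = mf j A R x z"
  proof -
    fix z assume z: "z \<in> {z\<in>A. R x z \<and> R z y \<and> z \<noteq> y}"
    have lt: "card (ivl x z) < card (ivl x y)" using ivl_sub True z by blast
    show "M x z = mf j A R x z" unfolding M_def by (rule mf_stable) (use lt j in auto)
  qed
  then have s: "(\<Sum>z\<in>{z\<in>A. R x z \<and> R z y \<and> z \<noteq> y}. (M x z :: 'k)) = (\<Sum>z\<in>{z\<in>A. R x z \<and> R z y \<and> z \<noteq> y}. mf j A R x z)"
    by (rule sum.cong[OF HOL.refl])
  have e: "(M x y :: 'k) = mf (Suc j) A R x y" unfolding M_def j ..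
  show ?thesis
  proof (cases "x = y")
    case xy: True
    then show ?thesis using e True by simp
  next
    case xy: False
    then have "(M x y :: 'k) = - (\<Sum>z\<in>{z\<in>A. R x z \<and> R z y \<and> z \<noteq> y}. mf j A R x z)" using e True by simp
    then show ?thesis using xy True s by simp
  qed
qed

lemma M_unique:
  assumes "\<forall>x y. \<mu> x y = (if x \<in> A \<and> y \<in> A \<and> R x y then
        (if x = y then 1 else - (\<Sum>z\<in>{z\<in>A. R x z \<and> R z y \<and> z \<noteq> y}. \<mu> x z)) else (0::'k::comm_ring_1))"
  shows "\<mu> x y = M x y"
proof (induction "card (ivl x y)" arbitrary: x y rule: less_induct)
  case less
  show ?case
  proof (cases "x \<in> A \<and> y \<in> A \<and> R x y")
    case False
    have a: "\<mu> x y = 0" using assms[rule_format, of x y] by (simp only: if_not_P[OF False])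
    have b: "(M x y :: 'k) = 0" using M_eq[of x y] by (simp only: if_not_P[OF False])
    show ?thesis using a b by simp
  next
    case True
    have h: "\<And>z. z \<in> {z\<in>A. R x z \<and> R z y \<and> z \<noteq> y} \<Longrightarrow> \<mu> x z = M x z"
      using less.hyps ivl_sub True by blast
    then have s: "(\<Sum>z\<in>{z\<in>A. R x z \<and> R z y \<and> z \<noteq> y}. \<mu> x z) = (\<Sum>z\<in>{z\<in>A. R x z \<and> R z y \<and> z \<noteq> y}. M x z)"
      by (rule sum.cong[OF HOL.refl])
    have a: "\<mu> x y = (if x = y then 1 else - (\<Sum>z\<in>{z\<in>A. R x z \<and> R z y \<and> z \<noteq> y}. \<mu> x z))"
      using assms[rule_format, of x y] by (simp only: if_P[OF True])
    have b: "(M x y :: 'k) = (if x = y then 1 else - (\<Sum>z\<in>{z\<in>A. R x z \<and> R z y \<and> z \<noteq> y}. M x z))"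
      using M_eq[of x y] by (simp only: if_P[OF True])
    show ?thesis unfolding a b s ..
  qed
qed

lemma mobius_eq: "mobius A R = (M :: 'a \<Rightarrow> 'a \<Rightarrow> 'k::comm_ring_1)"
  unfolding mobius_def
proof (rule the_equality)
  show "\<forall>x y. (M :: 'a \<Rightarrow> 'a \<Rightarrow> 'k) x y = (if x \<in> A \<and> y \<in> A \<and> R x y then
        (if x = y then 1 else - (\<Sum>z\<in>{z\<in>A. R x z \<and> R z y \<and> z \<noteq> y}. M x z)) else 0)"
    using M_eq by blast
  fix \<mu> :: "'a \<Rightarrow> 'a \<Rightarrow> 'k"
  assume "\<forall>x y. \<mu> x y = (if x \<in> A \<and> y \<in> A \<and> R x y then
        (if x = y then 1 else - (\<Sum>z\<in>{z\<in>A. R x z \<and> R z y \<and> z \<noteq> y}. \<mu> x z)) else 0)"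
  then show "\<mu> = M" using M_unique by blast
qed

lemma mob_refl: "x \<in> A \<Longrightarrow> (mobius A R x x :: 'k::comm_ring_1) = 1"
  unfolding mobius_eq using M_eq[of x x] rf by simp

lemma mob_sum:
  assumes "x \<in> A" "y \<in> A" "R x y"
  shows "(\<Sum>z\<in>ivl x y. (mobius A R x z :: 'k::comm_ring_1)) = (if x = y then 1 else 0)"
proof -
  have iv: "ivl x y = insert y {z\<in>A. R x z \<and> R z y \<and> z \<noteq> y}" unfolding ivl_def using assms rf by auto
  have fin: "finite {z\<in>A. R x z \<and> R z y \<and> z \<noteq> y}"
    using lf[OF assms(1,2)] by (rule finite_subset[rotated]) auto
  have "(\<Sum>z\<in>ivl x y. (M x z :: 'k)) = M x y + (\<Sum>z\<in>{z\<in>A. R x z \<and> R z y \<and> z \<noteq> y}. M x z)"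
    unfolding iv by (rule sum.insert[OF fin]) simp
  also have "\<dots> = (if x = y then 1 else 0)"
  proof (cases "x = y")
    case True
    have E: "{z\<in>A. R x z \<and> R z y \<and> z \<noteq> y} = {}" using an assms True by blast
    have m1: "(M x y :: 'k) = 1" using M_eq[of x y] assms True by simp
    show ?thesis by (simp only: E sum.empty m1 if_P[OF True] add_0_right)
  next
    case False
    have m: "(M x y :: 'k) = - (\<Sum>z\<in>{z\<in>A. R x z \<and> R z y \<and> z \<noteq> y}. M x z)"
      using M_eq[of x y] assms False by simp
    show ?thesis by (simp add: m False)
  qed
  finally show ?thesis unfolding mobius_eq .
qed

lemma mob_invariant:
  assumes hb: "bij_betw h A A" and hr: "\<And>a b. a \<in> A \<Longrightarrow> b \<in> A \<Longrightarrow> R (h a) (h b) \<longleftrightarrow> R a b"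
    and "x \<in> A" "y \<in> A"
  shows "(mobius A R (h x) (h y) :: 'k::comm_ring_1) = mobius A R x y"
  unfolding mobius_eq using assms(3,4)
proof (induction "card (ivl x y)" arbitrary: x y rule: less_induct)
  case less
  have hx: "h x \<in> A" "h y \<in> A" using less.prems hb by (auto simp: bij_betw_def)
  show ?case
  proof (cases "R x y")
    case False
    have a: "(M (h x) (h y) :: 'k) = 0" using M_eq[of "h x" "h y"] hr less.prems False by simp
    have b: "(M x y :: 'k) = 0" using M_eq[of x y] False by simp
    show ?thesis using a b by simp
  next
    case True
    show ?thesis
    proof (cases "x = y")
      case True
      have a: "(M (h x) (h y) :: 'k) = 1" using M_eq[of "h x" "h y"] hx rf True by simp
      have b: "(M x y :: 'k) = 1" using M_eq[of x y] less.prems rf True by simp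
      show ?thesis using a b by simp
    next
      case ne: False
      have hne: "h x \<noteq> h y" using ne hb less.prems by (auto simp: bij_betw_def inj_on_def)
      let ?I = "{z\<in>A. R x z \<and> R z y \<and> z \<noteq> y}"
      have im: "h ` ?I = {z\<in>A. R (h x) z \<and> R z (h y) \<and> z \<noteq> h y}"
      proof
        show "h ` ?I \<subseteq> {z\<in>A. R (h x) z \<and> R z (h y) \<and> z \<noteq> h y}"
          using hr less.prems hb by (auto simp: bij_betw_def inj_on_def)
        show "{z\<in>A. R (h x) z \<and> R z (h y) \<and> z \<noteq> h y} \<subseteq> h ` ?I"
        proof
          fix z assume z: "z \<in> {z\<in>A. R (h x) z \<and> R z (h y) \<and> z \<noteq> h y}"
          then obtain z' where z': "z' \<in> A" "z = h z'" using hb by (auto simp: bij_betw_def)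
          then show "z \<in> h ` ?I" using z hr less.prems by auto
        qed
      qed
      have inj: "inj_on h ?I" using hb by (auto simp: bij_betw_def intro: inj_on_subset)
      have "(\<Sum>z\<in>{z\<in>A. R (h x) z \<and> R z (h y) \<and> z \<noteq> h y}. (M (h x) z :: 'k)) = (\<Sum>z\<in>?I. M (h x) (h z))"
        unfolding im[symmetric] by (rule sum.reindex[OF inj, unfolded comp_def])
      also have "\<dots> = (\<Sum>z\<in>?I. M x z)"
      proof (rule sum.cong[OF HOL.refl])
        fix z assume z: "z \<in> ?I"
        have lt: "card (ivl x z) < card (ivl x y)" using ivl_sub less.prems True z by blast
        show "M (h x) (h z) = (M x z :: 'k)" using less.hyps[OF lt] less.prems z by blast
      qed
      moreover have "(M (h x) (h y) :: 'k) = - (\<Sum>z\<in>{z\<in>A. R (h x) z \<and> R z (h y) \<and> z \<noteq> h y}. M (h x) z)"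
        using M_eq[of "h x" "h y"] hx hne hr less.prems True by simp
      moreover have "(M x y :: 'k) = - (\<Sum>z\<in>?I. M x z)"
        using M_eq[of x y] less.prems True ne by simp
      ultimately show ?thesis by simp
    qed
  qed
qed

end



context spd begin

lemma lfp_I: "finite I \<Longrightarrow> lfp (H I) (le I)"
  by unfold_locales (auto intro: refl antisym trans locfin)

definition up :: "nat \<Rightarrow> 'a \<Rightarrow> 'a set" where "up n x = {y\<in>H (nset n). le (nset n) x y}"

lemma omega_lin:
  assumes "x \<in> H (nset n)" "finite (up n x)"
  shows "lin (H (nset n)) (omega H le n x :: 'a \<Rightarrow> 'k::comm_ring_1)"
proof -
  have "supp (omega H le n x :: 'a \<Rightarrow> 'k) \<subseteq> up n x" by (auto simp: supp_def omega_def up_def)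
  then show ?thesis using assms by (auto simp: lin_def up_def intro: finite_subset)
qed

lemma omega_sum_below:
  assumes x: "x \<in> H (nset n)" and fu: "finite (up n x)" and b: "b \<in> H (nset n)"
  shows "(\<Sum>y\<in>supp (omega H le n x :: 'a \<Rightarrow> 'k::comm_ring_1). if le (nset n) y b then (omega H le n x y :: 'k) else 0)
       = (if le (nset n) x b then (if x = b then 1 else 0) else 0)"
proof -
  let ?N = "nset n" let ?\<omega> = "omega H le n x :: 'a \<Rightarrow> 'k"
  interpret L: lfp "H ?N" "le ?N" by (rule lfp_I) simp
  have s: "supp ?\<omega> \<subseteq> up n x" by (auto simp: supp_def omega_def up_def)
  have "(\<Sum>y\<in>supp ?\<omega>. if le ?N y b then ?\<omega> y else 0) = (\<Sum>y\<in>up n x. if le ?N y b then ?\<omega> y else 0)"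
    by (rule sum.mono_neutral_left[OF fu s]) (auto simp: supp_def)
  also have "\<dots> = (\<Sum>y\<in>up n x. if y \<in> L.ivl x b then mobius (H ?N) (le ?N) x y else 0)"
    by (rule sum.cong) (auto simp: up_def L.ivl_def omega_def)
  also have "\<dots> = (\<Sum>y\<in>L.ivl x b. mobius (H ?N) (le ?N) x y)"
  proof -
    have "L.ivl x b \<subseteq> up n x" by (auto simp: up_def L.ivl_def)
    then have "up n x \<inter> L.ivl x b = L.ivl x b" by blast
    then show ?thesis using sum.inter_restrict[OF fu, of "mobius (H ?N) (le ?N) x :: 'a \<Rightarrow> 'k" "L.ivl x b"] by simp
  qed
  also have "\<dots> = (if le (nset n) x b then (if x = b then 1 else 0) else 0)"
  proof (cases "le ?N x b")
    case True then show ?thesis by (simp only: L.mob_sum[OF x b True] if_P[OF True] if_True)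
  next
    case False
    then have "L.ivl x b = {}" unfolding L.ivl_def using trans[OF finite_nset x _ b] by blast
    then show ?thesis using False by simp
  qed
  finally show ?thesis .
qed

lemma adjD:
  assumes "adjoint_pair H le D B" "finite S" "finite T" "S \<inter> T = {}" "x \<in> H (S \<union> T)" "y \<in> H S" "z \<in> H T"
  shows "(le S (fst (D S T x)) y \<and> le T (snd (D S T x)) z) \<longleftrightarrow> le (S \<union> T) x (B S T y z)"
  using assms unfolding adjoint_pair_def by blast

lemma monB:
  assumes "poset_monoid H le rl B" "finite S" "finite T" "S \<inter> T = {}" "y \<in> H S" "z \<in> H T"
  shows "B S T y z \<in> H (S \<union> T)"
  using assms(1)[unfolded poset_monoid_def, THEN conjunct1] assms(2-) by blast

lemma omega_prim:
  assumes adj: "adjoint_pair H le D B" and mon: "poset_monoid H le rl B"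
    and fu: "finite (up n x)" and ind: "indecomposable H B (nset n) x"
  shows "lin_primitive D (nset n) (omega H le n x :: 'a \<Rightarrow> 'k::field)"
  unfolding lin_primitive_def
proof (intro allI impI)
  let ?N = "nset n" let ?\<omega> = "omega H le n x :: 'a \<Rightarrow> 'k"
  have x: "x \<in> H ?N" using ind by (simp add: indecomposable_def)
  have lw: "lin (H ?N) ?\<omega>" by (rule omega_lin[OF x fu])
  have fw: "finite (supp ?\<omega>)" and sw: "supp ?\<omega> \<subseteq> H ?N" using lw by (auto simp: lin_def)
  fix S T assume ST: "S \<union> T = ?N \<and> S \<inter> T = {} \<and> S \<noteq> {} \<and> T \<noteq> {}"
  have fS: "finite S" and fT: "finite T" using ST by (metis finite_Un finite_nset)+
  have dj: "S \<inter> T = {}" using ST by blast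
  define P where "P = push (D S T) ?\<omega>"
  define A2 where "A2 = H S \<times> H T"
  define R2 where "R2 = (\<lambda>w w'. le S (fst w) (fst w') \<and> le T (snd w) (snd w'))"
  have fP: "finite (supp P)" unfolding P_def using fw by (rule finite_supp_push)
  have sP: "supp P \<subseteq> A2"
  proof
    fix w assume "w \<in> supp P"
    then obtain y where y: "y \<in> supp ?\<omega>" "w = D S T y" using supp_push[of "D S T" ?\<omega>] unfolding P_def by blast
    then have "y \<in> H (S \<union> T)" using sw ST by auto
    then show "w \<in> A2" unfolding A2_def using D_in[OF fS fT dj] y by (simp add: mem_Times_iff)
  qed
  show "push (D S T) ?\<omega> = 0"
    unfolding P_def[symmetric]
  proof (rule zeta_inj[OF fP sP, of R2])
    show "\<And>a. a \<in> A2 \<Longrightarrow> R2 a a" unfolding A2_def R2_def using refl fS fT by auto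
    show "\<And>a b. a \<in> A2 \<Longrightarrow> b \<in> A2 \<Longrightarrow> R2 a b \<Longrightarrow> R2 b a \<Longrightarrow> a = b"
      unfolding A2_def R2_def using antisym fS fT by (auto simp: prod_eq_iff)
    show "\<And>a b c. a \<in> A2 \<Longrightarrow> b \<in> A2 \<Longrightarrow> c \<in> A2 \<Longrightarrow> R2 a b \<Longrightarrow> R2 b c \<Longrightarrow> R2 a c"
      unfolding A2_def R2_def using trans fS fT by (auto simp: mem_Times_iff)
    fix ab assume ab: "ab \<in> A2"
    obtain a b where abe: "ab = (a, b)" and a: "a \<in> H S" and b: "b \<in> H T" using ab unfolding A2_def by auto
    define \<chi> :: "'a \<times> 'a \<Rightarrow> 'k" where "\<chi> = (\<lambda>w. if R2 w ab then 1 else 0)"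
    have "(\<Sum>w\<in>{w\<in>supp P. R2 w ab}. P w) = pair \<chi> P"
      unfolding pair_def \<chi>_def sum.inter_filter[OF fP] by (rule sum.cong) auto
    also have "\<dots> = pair (\<chi> \<circ> D S T) ?\<omega>" unfolding P_def by (rule pair_push[OF fw])
    also have "\<dots> = (\<Sum>y\<in>supp ?\<omega>. if le ?N y (B S T a b) then ?\<omega> y else 0)"
      unfolding pair_def
    proof (rule sum.cong[OF HOL.refl])
      fix y assume y: "y \<in> supp ?\<omega>"
      then have yH: "y \<in> H (S \<union> T)" using sw ST by auto
      have "R2 (D S T y) ab \<longleftrightarrow> le (S \<union> T) y (B S T a b)"
        unfolding R2_def abe using adjD[OF adj fS fT dj yH a b] by simp
      then show "(\<chi> \<circ> D S T) y * ?\<omega> y = (if le ?N y (B S T a b) then ?\<omega> y else 0)"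
        using ST by (simp add: \<chi>_def)
    qed
    also have "\<dots> = (if le ?N x (B S T a b) then (if x = B S T a b then 1 else 0) else 0)"
    proof (rule omega_sum_below[OF x fu])
      show "B S T a b \<in> H ?N" using monB[OF mon fS fT dj a b] ST by simp
    qed
    also have "\<dots> = 0"
    proof -
      have "x \<noteq> B S T a b" using ind ST a b unfolding indecomposable_def by blast
      then show ?thesis by simp
    qed
    finally show "(\<Sum>w\<in>{w\<in>supp P. R2 w ab}. P w) = 0" .
  qed
qed

end


context spd begin

lemma decomp:
  fixes p :: "'a \<Rightarrow> 'k::field"
  assumes adj: "adjoint_pair H le D B" and mon: "poset_monoid H le rl B"
    and upfin: "\<forall>x\<in>H (nset n). finite (up n x)"
    and lp: "lin (H (nset n)) p" and pp: "lin_primitive D (nset n) p"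
  shows "\<exists>F c. finite F \<and> (\<forall>x\<in>F. indecomposable H B (nset n) x) \<and>
           p = (\<lambda>y. \<Sum>x\<in>F. c x * omega H le n x y)"
proof -
  let ?N = "nset n"
  let ?\<omega> = "\<lambda>x. omega H le n x :: 'a \<Rightarrow> 'k"
  interpret L: lfp "H ?N" "le ?N" by (rule lfp_I) simp
  have fp: "finite (supp p)" and sp: "supp p \<subseteq> H ?N" using lp by (auto simp: lin_def)
  define U where "U = {x\<in>H ?N. \<exists>w\<in>supp p. le ?N w x}"
  have U_eq: "U = (\<Union>w\<in>supp p. up n w)" unfolding U_def up_def using sp by auto
  have fU: "finite U" unfolding U_eq using fp upfin sp by blast
  have UH: "U \<subseteq> H ?N" unfolding U_def by blast
  have Uup: "\<And>x y. x \<in> U \<Longrightarrow> y \<in> H ?N \<Longrightarrow> le ?N x y \<Longrightarrow> y \<in> U"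
    unfolding U_def using trans[OF finite_nset] sp by blast
  have spU: "supp p \<subseteq> U" unfolding U_def using sp refl[OF finite_nset] by blast
  define c where "c = (\<lambda>x. \<Sum>w\<in>{w\<in>supp p. le ?N w x}. p w)"
  define q where "q = (\<lambda>y. \<Sum>x\<in>U. c x * ?\<omega> x y)"
  have sqU: "supp q \<subseteq> U"
  proof
    fix y assume "y \<in> supp q"
    then have "(\<Sum>x\<in>U. c x * ?\<omega> x y) \<noteq> 0" by (simp add: supp_def q_def)
    then obtain x where x: "x \<in> U" "c x * ?\<omega> x y \<noteq> 0" using sum.not_neutral_contains_not_neutral by blast
    then have "y \<in> H ?N" "le ?N x y" by (auto simp: omega_def split: if_splits)
    then show "y \<in> U" using Uup x by blast
  qed
  have inner: "\<And>x z. x \<in> U \<Longrightarrow> z \<in> H ?N \<Longrightarrow>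
      (\<Sum>b\<in>{b\<in>U. le ?N b z}. ?\<omega> x b) = (if le ?N x z then (if x = z then 1 else 0) else 0)"
  proof -
    fix x z assume x: "x \<in> U" and z: "z \<in> H ?N"
    have xH: "x \<in> H ?N" using x UH by blast
    have fu: "finite (up n x)" using upfin xH by blast
    have sw: "supp (?\<omega> x) \<subseteq> U" using Uup x by (auto simp: supp_def omega_def split: if_splits)
    have "(\<Sum>b\<in>{b\<in>U. le ?N b z}. ?\<omega> x b) = (\<Sum>b\<in>U. if le ?N b z then ?\<omega> x b else 0)"
      by (rule sum.inter_filter[OF fU])
    also have "\<dots> = (\<Sum>b\<in>supp (?\<omega> x). if le ?N b z then ?\<omega> x b else 0)"
      by (rule sum.mono_neutral_right[OF fU sw]) (auto simp: supp_def)
    also have "\<dots> = (if le ?N x z then (if x = z then 1 else 0) else 0)"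
      by (rule omega_sum_below[OF xH fu z])
    finally show "(\<Sum>b\<in>{b\<in>U. le ?N b z}. ?\<omega> x b) = (if le ?N x z then (if x = z then 1 else 0) else 0)" .
  qed
  have cz0: "\<And>z. z \<in> H ?N \<Longrightarrow> z \<notin> U \<Longrightarrow> c z = 0"
  proof -
    fix z assume zH: "z \<in> H ?N" and z: "z \<notin> U"
    have e: "{w\<in>supp p. le ?N w z} = {}" using zH z unfolding U_def by blast
    show "c z = 0" unfolding c_def e by simp
  qed
  have key: "\<And>z. z \<in> H ?N \<Longrightarrow> (\<Sum>b\<in>{b\<in>U. le ?N b z}. q b) = c z"
  proof -
    fix z assume z: "z \<in> H ?N"
    have fB: "finite {b\<in>U. le ?N b z}" using fU by simp
    have "(\<Sum>b\<in>{b\<in>U. le ?N b z}. q b) = (\<Sum>x\<in>U. c x * (\<Sum>b\<in>{b\<in>U. le ?N b z}. ?\<omega> x b))"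
      unfolding q_def by (simp add: sum_distrib_left sum.swap[of _ "{b\<in>U. le ?N b z}" U])
    also have "\<dots> = (\<Sum>x\<in>U. if x = z then c x else 0)"
    proof (rule sum.cong[OF HOL.refl])
      fix x assume x: "x \<in> U"
      have xH: "x \<in> H ?N" using x UH by blast
      show "c x * (\<Sum>b\<in>{b\<in>U. le ?N b z}. ?\<omega> x b) = (if x = z then c x else 0)"
        using inner[OF x z] refl[OF finite_nset xH] by auto
    qed
    also have "\<dots> = (if z \<in> U then c z else 0)" by (rule sum.delta[OF fU])
    also have "\<dots> = c z" using cz0 z by auto
    finally show "(\<Sum>b\<in>{b\<in>U. le ?N b z}. q b) = c z" .
  qed
  have keyp: "\<And>z. (\<Sum>b\<in>{b\<in>U. le ?N b z}. p b) = c z"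
  proof -
    fix z
    show "(\<Sum>b\<in>{b\<in>U. le ?N b z}. p b) = c z" unfolding c_def
      by (rule sum.mono_neutral_right) (use fU spU in \<open>auto simp: supp_def\<close>)
  qed
  have fq: "finite (supp q)" using sqU fU finite_subset by blast
  have qp: "q - p = 0"
  proof (rule zeta_inj[of "q - p" "H ?N" "le ?N"])
    have s: "supp (q - p) \<subseteq> U" using supp_diff[of q p] sqU spU by blast
    then show "finite (supp (q - p))" using fU finite_subset by blast
    show "supp (q - p) \<subseteq> H ?N" using s UH by blast
    show "\<And>a. a \<in> H ?N \<Longrightarrow> le ?N a a" using refl[OF finite_nset] by blast
    show "\<And>a b. a \<in> H ?N \<Longrightarrow> b \<in> H ?N \<Longrightarrow> le ?N a b \<Longrightarrow> le ?N b a \<Longrightarrow> a = b" using antisym[OF finite_nset] by blast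
    show "\<And>a b c. a \<in> H ?N \<Longrightarrow> b \<in> H ?N \<Longrightarrow> c \<in> H ?N \<Longrightarrow> le ?N a b \<Longrightarrow> le ?N b c \<Longrightarrow> le ?N a c"
      using trans[OF finite_nset] by blast
    fix z assume z: "z \<in> H ?N"
    have "(\<Sum>b\<in>{b\<in>supp (q - p). le ?N b z}. (q - p) b) = (\<Sum>b\<in>{b\<in>U. le ?N b z}. (q - p) b)"
      by (rule sum.mono_neutral_left) (use fU s in \<open>auto simp: supp_def\<close>)
    also have "\<dots> = (\<Sum>b\<in>{b\<in>U. le ?N b z}. q b) - (\<Sum>b\<in>{b\<in>U. le ?N b z}. p b)"
      by (simp add: sum_subtractf)
    also have "\<dots> = 0" using key[OF z] keyp[of z] by simp
    finally show "(\<Sum>b\<in>{b\<in>supp (q - p). le ?N b z}. (q - p) b) = 0" .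
  qed
  then have pq: "p = q" by (simp add: fun_eq_iff)
  have cdec: "\<And>x. x \<in> U \<Longrightarrow> \<not> indecomposable H B ?N x \<Longrightarrow> c x = 0"
  proof -
    fix x assume xU: "x \<in> U" and nd: "\<not> indecomposable H B ?N x"
    have xH: "x \<in> H ?N" using xU UH by blast
    then obtain S T a b where ST: "S \<noteq> {}" "T \<noteq> {}" "S \<inter> T = {}" "S \<union> T = ?N"
      and a: "a \<in> H S" and b: "b \<in> H T" and xe: "x = B S T a b"
      using nd unfolding indecomposable_def by blast
    have fS: "finite S" and fT: "finite T" using ST by (metis finite_Un finite_nset)+
    define \<chi> :: "'a \<times> 'a \<Rightarrow> 'k" where "\<chi> = (\<lambda>w. if le S (fst w) a \<and> le T (snd w) b then 1 else 0)"
    have pd: "push (D S T) p = 0" using pp ST unfolding lin_primitive_def by blast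
    have "c x = (\<Sum>w\<in>supp p. if le ?N w x then p w else 0)"
      unfolding c_def by (rule sum.inter_filter[OF fp])
    also have "\<dots> = (\<Sum>w\<in>supp p. (\<chi> \<circ> D S T) w * p w)"
    proof (rule sum.cong[OF HOL.refl])
      fix w assume w: "w \<in> supp p"
      then have wH: "w \<in> H (S \<union> T)" using sp ST by auto
      have "(le S (fst (D S T w)) a \<and> le T (snd (D S T w)) b) \<longleftrightarrow> le (S \<union> T) w (B S T a b)"
        by (rule adjD[OF adj fS fT ST(3) wH a b])
      then show "(if le ?N w x then p w else 0) = (\<chi> \<circ> D S T) w * p w"
        using ST xe by (simp add: \<chi>_def)
    qed
    also have "\<dots> = pair (\<chi> \<circ> D S T) p" by (simp add: pair_def)
    also have "\<dots> = pair \<chi> (push (D S T) p)" by (rule pair_push[OF fp, symmetric])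
    also have "\<dots> = 0" using pd by simp
    finally show "c x = 0" .
  qed
  define F where "F = {x\<in>U. indecomposable H B ?N x}"
  have fF: "finite F" unfolding F_def using fU by simp
  have "q = (\<lambda>y. \<Sum>x\<in>F. c x * ?\<omega> x y)"
  proof
    fix y
    show "q y = (\<Sum>x\<in>F. c x * ?\<omega> x y)" unfolding q_def
      by (rule sum.mono_neutral_right[OF fU]) (use cdec in \<open>auto simp: F_def\<close>)
  qed
  then show ?thesis using pq fF unfolding F_def by blast
qed

end


context spd begin

lemma coinv_bij:
  fixes w :: "'a \<Rightarrow> 'k::field"
  assumes "lin (H (nset n)) w" "bij_betw \<tau> (nset n) (nset n)"
  shows "w - push (rl \<tau> (nset n)) w \<in> coinv_ker H rl n"
proof -
  let ?N = "nset n"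
  have fw: "finite (supp w)" and sw: "supp w \<subseteq> H ?N" using assms by (auto simp: lin_def)
  have e: "w - push (rl \<tau> ?N) w = (\<Sum>x\<in>supp w. (\<lambda>z. w x * (delta x - delta (rl \<tau> ?N x)) z))"
  proof
    fix z
    have "(\<Sum>x\<in>supp w. (\<lambda>z. w x * (delta x - delta (rl \<tau> ?N x)) z)) z
        = (\<Sum>x\<in>supp w. w x * delta x z) - (\<Sum>x\<in>supp w. w x * delta (rl \<tau> ?N x) z)"
      unfolding sum_fun_apply sum_subtractf[symmetric] by (rule sum.cong) (simp_all add: right_diff_distrib)
    also have "(\<Sum>x\<in>supp w. w x * delta x z) = w z"
      using fun_cong[OF delta_expand[OF fw], of z] unfolding sum_fun_apply by (rule sym)
    also have "(\<Sum>x\<in>supp w. w x * delta (rl \<tau> ?N x) z) = push (rl \<tau> ?N) w z"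
      unfolding push_def sum.inter_filter[OF fw] by (rule sum.cong) (auto simp: delta_def)
    finally show "(w - push (rl \<tau> ?N) w) z = (\<Sum>x\<in>supp w. (\<lambda>z. w x * (delta x - delta (rl \<tau> ?N x)) z)) z"
      by simp
  qed
  show ?thesis unfolding e coinv_ker_def
  proof (rule lspan_sum[OF fw])
    fix x assume "x \<in> supp w"
    then have "x \<in> H ?N" using sw by auto
    then have "delta x - delta (rl \<tau> ?N x) \<in> {delta x - delta (rl \<sigma> (nset n) x) | x \<sigma>. x \<in> H (nset n) \<and> bij_betw \<sigma> (nset n) (nset n)}"
      using assms(2) by blast
    then show "(\<lambda>z. w x * (delta x - delta (rl \<tau> ?N x)) z) \<in> lspan {delta x - delta (rl \<sigma> (nset n) x) | x \<sigma>. x \<in> H (nset n) \<and> bij_betw \<sigma> (nset n) (nset n)}"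
      by (intro lspan.smult lspan.gen)
  qed
qed

lemma omega_relabel:
  assumes x: "x \<in> H (nset n)" and fu: "finite (up n x)" and \<sigma>: "bij_betw \<sigma> (nset n) (nset n)"
  shows "(omega H le n (rl \<sigma> (nset n) x) :: 'a \<Rightarrow> 'k::field) = push (rl \<sigma> (nset n)) (omega H le n x)"
proof
  let ?N = "nset n" let ?h = "rl \<sigma> ?N"
  interpret L: lfp "H ?N" "le ?N" by (rule lfp_I) simp
  have hb: "bij_betw ?h (H ?N) (H ?N)" by (rule rl_bij[OF finite_nset \<sigma>])
  have hr: "\<And>a b. a \<in> H ?N \<Longrightarrow> b \<in> H ?N \<Longrightarrow> le ?N (?h a) (?h b) \<longleftrightarrow> le ?N a b"
    by (rule rl_le_iff[OF finite_nset \<sigma>])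
  have lw: "lin (H ?N) (omega H le n x :: 'a \<Rightarrow> 'k)" by (rule omega_lin[OF x fu])
  have inj: "inj_on ?h (H ?N)" using hb by (simp add: bij_betw_def)
  have hx: "?h x \<in> H ?N" using hb x by (auto simp: bij_betw_def)
  fix y
  show "(omega H le n (?h x) :: 'a \<Rightarrow> 'k) y = push ?h (omega H le n x) y"
  proof (cases "y \<in> H ?N")
    case True
    then obtain y' where y': "y' \<in> H ?N" "y = ?h y'" using hb by (auto simp: bij_betw_def)
    have "push ?h (omega H le n x :: 'a \<Rightarrow> 'k) (?h y') = omega H le n x y'"
      by (rule push_at_image[OF inj]) (use lw y' in \<open>auto simp: lin_def\<close>)
    moreover have "(omega H le n (?h x) :: 'a \<Rightarrow> 'k) (?h y') = omega H le n x y'"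
      unfolding omega_def using hr[OF x y'(1)] L.mob_invariant[OF hb hr x y'(1)] hx y'(1) hb
      by (auto simp: bij_betw_def)
    ultimately show ?thesis using y' by simp
  next
    case False
    have "supp (omega H le n x :: 'a \<Rightarrow> 'k) \<subseteq> H ?N" using lw by (simp add: lin_def)
    then have "y \<notin> ?h ` supp (omega H le n x :: 'a \<Rightarrow> 'k)" using False hb by (auto simp: bij_betw_def)
    then have "push ?h (omega H le n x :: 'a \<Rightarrow> 'k) y = 0" by (rule push_outside)
    then show ?thesis using False by (simp add: omega_def)
  qed
qed

lemma ker_pair:
  fixes w :: "'a \<Rightarrow> 'k::field"
  assumes "w \<in> coinv_ker H rl n"
    and inv: "\<And>x \<sigma>. x \<in> H (nset n) \<Longrightarrow> bij_betw \<sigma> (nset n) (nset n) \<Longrightarrow> \<chi> (rl \<sigma> (nset n) x) = \<chi> x"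
  shows "pair \<chi> w = 0"
  using assms(1) unfolding coinv_ker_def
proof (rule lspan_pair)
  fix g :: "'a \<Rightarrow> 'k"
  assume "g \<in> {delta x - delta (rl \<sigma> (nset n) x) | x \<sigma>. x \<in> H (nset n) \<and> bij_betw \<sigma> (nset n) (nset n)}"
  then obtain x \<sigma> where e: "g = delta x - delta (rl \<sigma> (nset n) x)" and h: "x \<in> H (nset n)" "bij_betw \<sigma> (nset n) (nset n)"
    by blast
  show "finite (supp g)" unfolding e using supp_diff[of "delta x" "delta (rl \<sigma> (nset n) x)"] fin_delta
    by (metis finite_Un finite_subset)
  have "pair \<chi> g = \<chi> x - \<chi> (rl \<sigma> (nset n) x)" unfolding e by (simp add: pair_diff fin_delta pair_delta)
  then show "pair \<chi> g = 0" using inv[OF h] by simp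
qed

lemma card_up_rl:
  assumes x: "x \<in> H (nset n)" and \<sigma>: "bij_betw \<sigma> (nset n) (nset n)"
  shows "card (up n (rl \<sigma> (nset n) x)) = card (up n x)"
proof -
  let ?N = "nset n" let ?h = "rl \<sigma> ?N"
  have hb: "bij_betw ?h (H ?N) (H ?N)" by (rule rl_bij[OF finite_nset \<sigma>])
  have hr: "\<And>a b. a \<in> H ?N \<Longrightarrow> b \<in> H ?N \<Longrightarrow> le ?N (?h a) (?h b) \<longleftrightarrow> le ?N a b"
    by (rule rl_le_iff[OF finite_nset \<sigma>])
  have "up n (?h x) = ?h ` up n x"
  proof
    show "?h ` up n x \<subseteq> up n (?h x)" using hr x hb by (auto simp: up_def bij_betw_def)
    show "up n (?h x) \<subseteq> ?h ` up n x"
    proof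
      fix y assume y: "y \<in> up n (?h x)"
      then obtain y' where y': "y' \<in> H ?N" "y = ?h y'" using hb by (auto simp: up_def bij_betw_def)
      then show "y \<in> ?h ` up n x" using y hr x by (auto simp: up_def)
    qed
  qed
  moreover have "inj_on ?h (up n x)" using hb by (auto simp: bij_betw_def up_def intro: inj_on_subset)
  ultimately show ?thesis by (simp add: card_image)
qed

lemma up_card_eq:
  assumes z: "z \<in> H (nset n)" and y: "y \<in> H (nset n)" and zy: "le (nset n) z y"
    and fu: "finite (up n z)" and c: "card (up n z) \<le> card (up n y)"
  shows "z = y"
proof -
  have sub: "up n y \<subseteq> up n z" unfolding up_def using trans[OF finite_nset z y] zy by blast
  then have "up n y = up n z" using card_subset_eq[OF fu sub] c card_mono[OF fu sub] by simp
  then have "z \<in> up n y" using z refl[OF finite_nset z] by (auto simp: up_def)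
  then have "le (nset n) y z" by (simp add: up_def)
  then show ?thesis using antisym[OF finite_nset z y zy] by simp
qed

end


context spd begin

lemma indep:
  fixes c :: "'a \<Rightarrow> 'k::field_char_0"
  assumes upfin: "\<forall>x\<in>H (nset n). finite (up n x)"
    and fF: "finite F" and FH: "\<forall>x\<in>F. x \<in> H (nset n)"
    and pw: "\<forall>x\<in>F. \<forall>y\<in>F. x \<noteq> y \<longrightarrow> omega H le n x - omega H le n y \<notin> (coinv_ker H rl n :: ('a \<Rightarrow> 'k) set)"
    and sk: "(\<lambda>y. \<Sum>x\<in>F. c x * omega H le n x y) \<in> coinv_ker H rl n"
  shows "\<forall>x\<in>F. c x = 0"
proof (rule ccontr)
  let ?N = "nset n"
  let ?\<omega> = "\<lambda>x. omega H le n x :: 'a \<Rightarrow> 'k"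
  interpret L: lfp "H ?N" "le ?N" by (rule lfp_I) simp
  assume "\<not> (\<forall>x\<in>F. c x = 0)"
  define F' where "F' = {x\<in>F. c x \<noteq> 0}"
  have F'ne: "F' \<noteq> {}" and fF': "finite F'" using \<open>\<not> (\<forall>x\<in>F. c x = 0)\<close> fF by (auto simp: F'_def)
  define f where "f = (\<lambda>x. card (up n x))"
  have "Max (f ` F') \<in> f ` F'" by (rule Max_in) (use fF' F'ne in auto)
  then obtain x0 where x0: "x0 \<in> F'" "f x0 = Max (f ` F')" by (metis imageE)
  have x0max: "\<And>z. z \<in> F' \<Longrightarrow> f z \<le> f x0" using x0 fF' by simp
  have x0F: "x0 \<in> F" and cx0: "c x0 \<noteq> 0" using x0 by (auto simp: F'_def)
  have x0H: "x0 \<in> H ?N" using FH x0F by blast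
  define Orb where "Orb = {y. \<exists>\<sigma>. bij_betw \<sigma> ?N ?N \<and> y = rl \<sigma> ?N x0}"
  define \<chi> :: "'a \<Rightarrow> 'k" where "\<chi> = (\<lambda>y. if y \<in> Orb then 1 else 0)"
  have OrbH: "Orb \<subseteq> H ?N" unfolding Orb_def using rl_in'[OF finite_nset _ x0H] by blast
  have x0Orb: "x0 \<in> Orb"
  proof -
    have r: "x0 = rl id ?N x0" using rl_id[OF finite_nset x0H] by simp
    have b: "bij_betw id ?N ?N" by (rule bij_betw_id)
    show ?thesis unfolding Orb_def using r b by blast
  qed
  have Oinv: "\<And>x \<sigma>. x \<in> H ?N \<Longrightarrow> bij_betw \<sigma> ?N ?N \<Longrightarrow> rl \<sigma> ?N x \<in> Orb \<longleftrightarrow> x \<in> Orb"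
  proof
    fix x \<sigma> assume x: "x \<in> H ?N" and \<sigma>: "bij_betw \<sigma> ?N ?N"
    have i\<sigma>: "inj_on \<sigma> ?N" "\<sigma> ` ?N = ?N" using \<sigma> by (auto simp: bij_betw_def)
    {
      assume "x \<in> Orb"
      then obtain \<tau> where \<tau>: "bij_betw \<tau> ?N ?N" "x = rl \<tau> ?N x0" by (auto simp: Orb_def)
      have "rl \<sigma> ?N x = rl (\<sigma> \<circ> \<tau>) ?N x0"
        using rl_comp[OF finite_nset _ _ x0H, of \<tau> \<sigma>] \<tau> i\<sigma> by (simp add: bij_betw_def)
      moreover have "bij_betw (\<sigma> \<circ> \<tau>) ?N ?N" using \<tau> \<sigma> bij_betw_trans by blast
      ultimately show "rl \<sigma> ?N x \<in> Orb" unfolding Orb_def by blast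
    }
    {
      assume "rl \<sigma> ?N x \<in> Orb"
      then obtain \<tau> where \<tau>: "bij_betw \<tau> ?N ?N" "rl \<sigma> ?N x = rl \<tau> ?N x0" by (auto simp: Orb_def)
      let ?s = "the_inv_into ?N \<sigma>"
      have bs: "bij_betw ?s ?N ?N" using bij_betw_the_inv_into[OF \<sigma>] .
      have "x = rl ?s ?N (rl \<sigma> ?N x)" using rl_inv[OF finite_nset \<sigma> x] by simp
      also have "\<dots> = rl ?s ?N (rl \<tau> ?N x0)" using \<tau> by simp
      also have "\<dots> = rl (?s \<circ> \<tau>) ?N x0"
        using rl_comp[OF finite_nset _ _ x0H, of \<tau> ?s] \<tau> bs by (simp add: bij_betw_def)
      finally have "x = rl (?s \<circ> \<tau>) ?N x0" .
      moreover have "bij_betw (?s \<circ> \<tau>) ?N ?N" using \<tau> bs bij_betw_trans by blast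
      ultimately show "x \<in> Orb" unfolding Orb_def by blast
    }
  qed
  have p0: "pair \<chi> (\<lambda>y. \<Sum>x\<in>F. c x * ?\<omega> x y) = 0"
    by (rule ker_pair[OF sk]) (simp add: \<chi>_def Oinv)
  have lw: "\<And>x. x \<in> F \<Longrightarrow> lin (H ?N) (?\<omega> x)" using omega_lin FH upfin by blast
  have fw: "\<And>x. x \<in> F \<Longrightarrow> finite (supp (\<lambda>y. c x * ?\<omega> x y))"
    using lw supp_smult finite_subset by (metis lin_def)
  have fe: "(\<lambda>y. \<Sum>x\<in>F. c x * ?\<omega> x y) = (\<Sum>x\<in>F. (\<lambda>y. c x * ?\<omega> x y))"
    by (simp add: fun_eq_iff sum_fun_apply)
  have "pair \<chi> (\<lambda>y. \<Sum>x\<in>F. c x * ?\<omega> x y) = (\<Sum>x\<in>F. c x * pair \<chi> (?\<omega> x))"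
    unfolding fe by (simp add: pair_sum[OF fF fw] pair_smult)
  also have "\<dots> = (\<Sum>x\<in>F. if x = x0 then c x0 else 0)"
  proof (rule sum.cong[OF HOL.refl])
    fix z assume zF: "z \<in> F"
    have zH: "z \<in> H ?N" using FH zF by blast
    have fuz: "finite (up n z)" using upfin zH by blast
    show "c z * pair \<chi> (?\<omega> z) = (if z = x0 then c x0 else 0)"
    proof (cases "c z = 0")
      case True then show ?thesis using cx0 by auto
    next
      case False
      then have zF': "z \<in> F'" using zF by (simp add: F'_def)
      have key: "\<And>y. y \<in> supp (?\<omega> z) \<Longrightarrow> y \<in> Orb \<Longrightarrow> z = y"
      proof -
        fix y assume ys: "y \<in> supp (?\<omega> z)" and yOrb: "y \<in> Orb"
        have yH: "y \<in> H ?N" and zy: "le ?N z y" using ys by (auto simp: supp_def omega_def split: if_splits)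
        obtain \<sigma> where \<sigma>: "bij_betw \<sigma> ?N ?N" "y = rl \<sigma> ?N x0" using yOrb by (auto simp: Orb_def)
        have "f y = f x0" unfolding f_def \<sigma>(2) by (rule card_up_rl[OF x0H \<sigma>(1)])
        then have "card (up n z) \<le> card (up n y)" using x0max[OF zF'] by (simp add: f_def)
        then show "z = y" by (rule up_card_eq[OF zH yH zy fuz])
      qed
      show ?thesis
      proof (cases "z = x0")
        case False
        have "\<forall>y\<in>supp (?\<omega> z). \<chi> y = 0"
        proof
          fix y assume ys: "y \<in> supp (?\<omega> z)"
          show "\<chi> y = 0"
          proof (rule ccontr)
            assume "\<chi> y \<noteq> 0"
            then have yOrb: "y \<in> Orb" by (simp add: \<chi>_def split: if_splits)
            then have "z \<in> Orb" using key[OF ys yOrb] by simp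
            then obtain \<sigma> where \<sigma>: "bij_betw \<sigma> ?N ?N" "z = rl \<sigma> ?N x0" by (auto simp: Orb_def)
            have fu0: "finite (up n x0)" using upfin x0H by blast
            have "?\<omega> z = push (rl \<sigma> ?N) (?\<omega> x0)" unfolding \<sigma>(2) by (rule omega_relabel[OF x0H fu0 \<sigma>(1)])
            moreover have "?\<omega> x0 - push (rl \<sigma> ?N) (?\<omega> x0) \<in> coinv_ker H rl n"
              by (rule coinv_bij[OF omega_lin[OF x0H fu0] \<sigma>(1)])
            ultimately have k: "?\<omega> x0 - ?\<omega> z \<in> coinv_ker H rl n" by simp
            have eq: "?\<omega> z - ?\<omega> x0 = (\<lambda>y. (-1) * (?\<omega> x0 - ?\<omega> z) y)" by (simp add: fun_eq_iff)
            have k': "(\<lambda>y. (-1) * (?\<omega> x0 - ?\<omega> z) y) \<in> coinv_ker H rl n"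
              using k unfolding coinv_ker_def by (rule lspan.smult)
            have "?\<omega> z - ?\<omega> x0 \<in> coinv_ker H rl n" unfolding eq by (rule k')
            then show False using pw zF x0F False by blast
          qed
        qed
        then have "pair \<chi> (?\<omega> z) = 0" by (simp add: pair_def)
        then show ?thesis using False by simp
      next
        case zx: True
        have one: "?\<omega> z z = 1"
        proof -
          have "(mobius (H ?N) (le ?N) z z :: 'k) = 1" by (rule L.mob_refl[OF zH])
          then show ?thesis using zH refl[OF finite_nset zH] by (simp add: omega_def)
        qed
        have "pair \<chi> (?\<omega> z) = (\<Sum>y\<in>supp (?\<omega> z). if y = z then ?\<omega> z y else 0)"
          unfolding pair_def
        proof (rule sum.cong[OF HOL.refl])
          fix y assume ys: "y \<in> supp (?\<omega> z)"
          show "\<chi> y * ?\<omega> z y = (if y = z then ?\<omega> z y else 0)"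
          proof (cases "y = z")
            case True then show ?thesis using zx x0Orb by (simp add: \<chi>_def)
          next
            case False
            then have "y \<notin> Orb" using key[OF ys] by blast
            then show ?thesis using False by (simp add: \<chi>_def)
          qed
        qed
        also have "\<dots> = ?\<omega> z z"
        proof -
          have zs: "z \<in> supp (?\<omega> z)" using one by (simp add: supp_def)
          have fs: "finite (supp (?\<omega> z))" using lw[OF zF] by (simp add: lin_def)
          show ?thesis using sum.delta[OF fs, of z "?\<omega> z"] zs by simp
        qed
        finally show ?thesis using zx one by simp
      qed
    qed
  qed
  also have "\<dots> = c x0" using sum.delta[OF fF, of x0 "\<lambda>_. c x0"] x0F by simp
  finally show False using p0 cx0 by simp
qed

end

theorem mainTheorem7:
  fixes H :: "nat set \<Rightarrow> 'a set"
    and le :: "nat set \<Rightarrow> 'a \<Rightarrow> 'a \<Rightarrow> bool"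
    and rl :: "(nat \<Rightarrow> nat) \<Rightarrow> nat set \<Rightarrow> 'a \<Rightarrow> 'a"
    and m :: "nat set \<Rightarrow> nat set \<Rightarrow> 'a \<Rightarrow> 'a \<Rightarrow> 'a"
    and D :: "nat set \<Rightarrow> nat set \<Rightarrow> 'a \<Rightarrow> 'a \<times> 'a"
  assumes hopf: "poset_hopf_monoid H le rl m D"
  shows "(\<forall>n \<ge> 1. \<forall>v :: 'a \<Rightarrow> 'k::field_char_0. lin (H (nset n)) v \<longrightarrow>
            (fock_primitive H rl D n v \<longleftrightarrow>
             (\<exists>p. lin (H (nset n)) p \<and> lin_primitive D (nset n) p \<and> v - p \<in> coinv_ker H rl n)))
       \<and> (\<forall>B. poset_monoid H le rl B \<and> adjoint_pair H le D B \<and>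
              (\<forall>n. \<forall>x\<in>H (nset n). finite {y \<in> H (nset n). le (nset n) x y}) \<longrightarrow>
            (\<forall>n \<ge> 1.
              (\<forall>x. indecomposable H B (nset n) x \<longrightarrow>
                   fock_primitive H rl D n (omega H le n x :: 'a \<Rightarrow> 'k)) \<and>
              (\<forall>v :: 'a \<Rightarrow> 'k. lin (H (nset n)) v \<and> fock_primitive H rl D n v \<longrightarrow>
                   (\<exists>F c. finite F \<and> (\<forall>x\<in>F. indecomposable H B (nset n) x) \<and>
                      v - (\<lambda>y. \<Sum>x\<in>F. c x * omega H le n x y) \<in> coinv_ker H rl n)) \<and>
              (\<forall>F (c :: 'a \<Rightarrow> 'k). finite F \<and> (\<forall>x\<in>F. indecomposable H B (nset n) x) \<and>
                   (\<forall>x\<in>F. \<forall>y\<in>F. x \<noteq> y \<longrightarrow> omega H le n x - omega H le n y \<notin> (coinv_ker H rl n :: ('a \<Rightarrow> 'k) set)) \<and>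
                   (\<lambda>y. \<Sum>x\<in>F. c x * omega H le n x y) \<in> coinv_ker H rl n \<longrightarrow>
                   (\<forall>x\<in>F. c x = 0))))"
proof -
  have sp: "poset_species H le rl" and cm: "poset_comonoid H le rl D"
    using hopf unfolding poset_hopf_monoid_def by blast+
  interpret spd H le rl D by (intro spd.intro spc.intro spd_axioms.intro sp cm)
  have A: "\<forall>n \<ge> 1. \<forall>v :: 'a \<Rightarrow> 'k::field_char_0. lin (H (nset n)) v \<longrightarrow>
            (fock_primitive H rl D n v \<longleftrightarrow>
             (\<exists>p. lin (H (nset n)) p \<and> lin_primitive D (nset n) p \<and> v - p \<in> coinv_ker H rl n))"
    using part1 by blast
  have B: "\<forall>B. poset_monoid H le rl B \<and> adjoint_pair H le D B \<and>
              (\<forall>n. \<forall>x\<in>H (nset n). finite {y \<in> H (nset n). le (nset n) x y}) \<longrightarrow>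
            (\<forall>n \<ge> 1.
              (\<forall>x. indecomposable H B (nset n) x \<longrightarrow>
                   fock_primitive H rl D n (omega H le n x :: 'a \<Rightarrow> 'k)) \<and>
              (\<forall>v :: 'a \<Rightarrow> 'k. lin (H (nset n)) v \<and> fock_primitive H rl D n v \<longrightarrow>
                   (\<exists>F c. finite F \<and> (\<forall>x\<in>F. indecomposable H B (nset n) x) \<and>
                      v - (\<lambda>y. \<Sum>x\<in>F. c x * omega H le n x y) \<in> coinv_ker H rl n)) \<and>
              (\<forall>F (c :: 'a \<Rightarrow> 'k). finite F \<and> (\<forall>x\<in>F. indecomposable H B (nset n) x) \<and>
                   (\<forall>x\<in>F. \<forall>y\<in>F. x \<noteq> y \<longrightarrow> omega H le n x - omega H le n y \<notin> (coinv_ker H rl n :: ('a \<Rightarrow> 'k) set)) \<and>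
                   (\<lambda>y. \<Sum>x\<in>F. c x * omega H le n x y) \<in> coinv_ker H rl n \<longrightarrow>
                   (\<forall>x\<in>F. c x = 0)))"
  proof (intro allI impI)
    fix B and n :: nat
    assume hB: "poset_monoid H le rl B \<and> adjoint_pair H le D B \<and>
              (\<forall>n. \<forall>x\<in>H (nset n). finite {y \<in> H (nset n). le (nset n) x y})"
      and n1: "1 \<le> n"
    have mon: "poset_monoid H le rl B" and adj: "adjoint_pair H le D B" using hB by blast+
    have upfin: "\<forall>x\<in>H (nset n). finite (up n x)" using hB by (simp add: up_def)
    have a: "\<forall>x. indecomposable H B (nset n) x \<longrightarrow> fock_primitive H rl D n (omega H le n x :: 'a \<Rightarrow> 'k)"
    proof (intro allI impI)
      fix x assume ind: "indecomposable H B (nset n) x"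
      have xH: "x \<in> H (nset n)" using ind by (simp add: indecomposable_def)
      have lw: "lin (H (nset n)) (omega H le n x :: 'a \<Rightarrow> 'k)" using omega_lin xH upfin by blast
      have pw: "lin_primitive D (nset n) (omega H le n x :: 'a \<Rightarrow> 'k)"
        using omega_prim[OF adj mon _ ind] upfin xH by blast
      have "(omega H le n x :: 'a \<Rightarrow> 'k) - omega H le n x \<in> coinv_ker H rl n"
        by (simp add: coinv_ker_def lspan.zero)
      then show "fock_primitive H rl D n (omega H le n x :: 'a \<Rightarrow> 'k)"
        using part1[OF lw] lw pw by blast
    qed
    have b: "\<forall>v :: 'a \<Rightarrow> 'k. lin (H (nset n)) v \<and> fock_primitive H rl D n v \<longrightarrow>
                   (\<exists>F c. finite F \<and> (\<forall>x\<in>F. indecomposable H B (nset n) x) \<and>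
                      v - (\<lambda>y. \<Sum>x\<in>F. c x * omega H le n x y) \<in> coinv_ker H rl n)"
    proof (intro allI impI)
      fix v :: "'a \<Rightarrow> 'k" assume hv: "lin (H (nset n)) v \<and> fock_primitive H rl D n v"
      then obtain p where lp: "lin (H (nset n)) p" and pp: "lin_primitive D (nset n) p"
        and k: "v - p \<in> coinv_ker H rl n" using part1 by blast
      obtain F c where F: "finite F" "\<forall>x\<in>F. indecomposable H B (nset n) x"
        and pe: "p = (\<lambda>y. \<Sum>x\<in>F. c x * omega H le n x y)"
        using decomp[OF adj mon upfin lp pp] by blast
      show "\<exists>F c. finite F \<and> (\<forall>x\<in>F. indecomposable H B (nset n) x) \<and>
                      v - (\<lambda>y. \<Sum>x\<in>F. c x * omega H le n x y) \<in> coinv_ker H rl n"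
        using F pe k by blast
    qed
    have c: "\<forall>F (c :: 'a \<Rightarrow> 'k). finite F \<and> (\<forall>x\<in>F. indecomposable H B (nset n) x) \<and>
                   (\<forall>x\<in>F. \<forall>y\<in>F. x \<noteq> y \<longrightarrow> omega H le n x - omega H le n y \<notin> (coinv_ker H rl n :: ('a \<Rightarrow> 'k) set)) \<and>
                   (\<lambda>y. \<Sum>x\<in>F. c x * omega H le n x y) \<in> coinv_ker H rl n \<longrightarrow>
                   (\<forall>x\<in>F. c x = 0)"
    proof (intro allI impI)
      fix F and c :: "'a \<Rightarrow> 'k"
      assume h: "finite F \<and> (\<forall>x\<in>F. indecomposable H B (nset n) x) \<and>
                   (\<forall>x\<in>F. \<forall>y\<in>F. x \<noteq> y \<longrightarrow> omega H le n x - omega H le n y \<notin> (coinv_ker H rl n :: ('a \<Rightarrow> 'k) set)) \<and>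
                   (\<lambda>y. \<Sum>x\<in>F. c x * omega H le n x y) \<in> coinv_ker H rl n"
      have FH: "\<forall>x\<in>F. x \<in> H (nset n)" using h by (simp add: indecomposable_def)
      show "\<forall>x\<in>F. c x = 0" using indep[OF upfin _ FH, of c] h by blast
    qed
    show "(\<forall>x. indecomposable H B (nset n) x \<longrightarrow>
                   fock_primitive H rl D n (omega H le n x :: 'a \<Rightarrow> 'k)) \<and>
              (\<forall>v :: 'a \<Rightarrow> 'k. lin (H (nset n)) v \<and> fock_primitive H rl D n v \<longrightarrow>
                   (\<exists>F c. finite F \<and> (\<forall>x\<in>F. indecomposable H B (nset n) x) \<and>
                      v - (\<lambda>y. \<Sum>x\<in>F. c x * omega H le n x y) \<in> coinv_ker H rl n)) \<and>
              (\<forall>F (c :: 'a \<Rightarrow> 'k). finite F \<and> (\<forall>x\<in>F. indecomposable H B (nset n) x) \<and>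
                   (\<forall>x\<in>F. \<forall>y\<in>F. x \<noteq> y \<longrightarrow> omega H le n x - omega H le n y \<notin> (coinv_ker H rl n :: ('a \<Rightarrow> 'k) set)) \<and>
                   (\<lambda>y. \<Sum>x\<in>F. c x * omega H le n x y) \<in> coinv_ker H rl n \<longrightarrow>
                   (\<forall>x\<in>F. c x = 0))"
      using a b c by blast
  qed
  show ?thesis using A B by blast
qed

end
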